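(* If $\widetilde\alpha^{[+2]}$ is a smooth spin-$+2$-weighted function satisfying $\mathfrak T^{[+2]}\widetilde\alpha^{[+2]}=0$, then $$\big(\mathcal L^{[+2]}(\mathcal L^{[+2]}-2)-12M\partial_t\big)\widetilde\alpha^{[+2]}=w^2(w^{-1}L)(w^{-1}L)(w^{-1}\underline L)(w^{-1}\underline L)\widetilde\alpha^{[+2]}.$$ If $\widetilde\alpha^{[-2]}$ is a smooth spin-$-2$-weighted function satisfying $\mathfrak T^{[-2]}\widetilde\alpha^{[-2]}=0$, then $$\big(\mathcal L^{[-2]}(\mathcal L^{[-2]}-2)+12M\partial_t\big)\widetilde\alpha^{[-2]}=w^2(w^{-1}\underline L)(w^{-1}\underline L)(w^{-1}L)(w^{-1}L)\widetilde\alpha^{[-2]}.$$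
   Context: Fix $M>0$, $k>0$; $\Delta(r)=r^2+k^2r^4-2Mr$, $w:=\Delta/r^4$. On the Schwarzschild–AdS exterior with metric $-(1+k^2r^2-\frac{2M}{r})dt^2+(1+k^2r^2-\frac{2M}{r})^{-1}dr^2+r^2(d\vartheta^2+\sin^2\vartheta d\varphi^2)$, let $r^\star$ be given by $dr^\star/dr=r^2/\Delta$, $r^\star(\infty)=\pi/2$; $L=\partial_t+\partial_{r^\star}$, $\underline L=\partial_t-\partial_{r^\star}$, $w'=dw/dr^\star$; $(w^{-1}L)$ denotes the operator $\phi\mapsto w^{-1}L\phi$ and products denote compositions. $-\mathcal{L}^{[\pm2]}:=\frac{1}{\sin\vartheta}\partial_\vartheta(\sin\vartheta\partial_\vartheta)+\frac{1}{\sin^2\vartheta}\partial_\varphi^2\pm4i\frac{\cos\vartheta}{\sin^2\vartheta}\partial_\varphi-4\cot^2\vartheta-4$ on spin $\pm2$ functions. Teukolsky operators: $\mathfrak T^{[+2]}\phi=-L\underline L\phi+2\frac{w'}{w}\underline L\phi-w(\mathcal L^{[+2]}-2+\frac{6M}{r})\phi$, $\mathfrak T^{[-2]}\phi=-L\underline L\phi-2\frac{w'}{w}L\phi-w(\mathcal L^{[-2]}-2+\frac{6M}{r})\phi$. *)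

theory Defs
  imports "HOL-Analysis.Analysis"
begin

text \<open>Points are coordinates (t, r, theta, varphi) of the Schwarzschild-AdS exterior.
  The tortoise derivative d/dr* is expressed as (Delta/r^2) d/dr.\<close>

type_synonym pt = "real \<times> real \<times> real \<times> real"
type_synonym fn = "pt \<Rightarrow> complex"

definition Delta :: "real \<Rightarrow> real \<Rightarrow> real \<Rightarrow> real" where
  "Delta M k r = r^2 + k^2 * r^4 - 2 * M * r"

definition wf :: "real \<Rightarrow> real \<Rightarrow> real \<Rightarrow> real" where
  "wf M k r = Delta M k r / r^4"

definition wprime :: "real \<Rightarrow> real \<Rightarrow> real \<Rightarrow> real" where
  "wprime M k r = Delta M k r / r^2 * deriv (wf M k) r"

definition exterior :: "real \<Rightarrow> real \<Rightarrow> pt set" where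
  "exterior M k = {(t, r, th, ph). 0 < r \<and> 0 < Delta M k r \<and> 0 < th \<and> th < pi}"

definition ev :: "nat \<Rightarrow> pt" where
  "ev i = (if i = 0 then (1,0,0,0) else if i = 1 then (0,1,0,0)
           else if i = 2 then (0,0,1,0) else (0,0,0,1))"

text \<open>Coordinate partial derivative: 0 = t, 1 = r, 2 = theta, 3 = varphi.\<close>
definition pd :: "nat \<Rightarrow> fn \<Rightarrow> fn" where
  "pd i u = (\<lambda>p. vector_derivative (\<lambda>s. u (p + s *\<^sub>R ev i)) (at 0))"

definition smooth_on_pt :: "pt set \<Rightarrow> fn \<Rightarrow> bool" where
  "smooth_on_pt D u \<longleftrightarrow> (\<forall>is. \<forall>p\<in>D. fold pd is u differentiable (at p))"

definition Lop :: "real \<Rightarrow> real \<Rightarrow> fn \<Rightarrow> fn" where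
  "Lop M k u = (\<lambda>(t, r, th, ph). pd 0 u (t, r, th, ph)
        + complex_of_real (Delta M k r / r^2) * pd 1 u (t, r, th, ph))"

definition Lbar :: "real \<Rightarrow> real \<Rightarrow> fn \<Rightarrow> fn" where
  "Lbar M k u = (\<lambda>(t, r, th, ph). pd 0 u (t, r, th, ph)
        - complex_of_real (Delta M k r / r^2) * pd 1 u (t, r, th, ph))"

definition winvL :: "real \<Rightarrow> real \<Rightarrow> fn \<Rightarrow> fn" where
  "winvL M k u = (\<lambda>(t, r, th, ph). complex_of_real (1 / wf M k r) * Lop M k u (t, r, th, ph))"

definition winvLbar :: "real \<Rightarrow> real \<Rightarrow> fn \<Rightarrow> fn" where
  "winvLbar M k u = (\<lambda>(t, r, th, ph). complex_of_real (1 / wf M k r) * Lbar M k u (t, r, th, ph))"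

text \<open>Angular operator L^{[s]} for s = 2*sg, sg \<in> {1,-1}:
  -L u = (1/sin) d_th(sin d_th u) + (1/sin^2) d_ph^2 u + sg*4i cos/sin^2 d_ph u - 4 cot^2 u - 4 u\<close>
definition Lang :: "real \<Rightarrow> fn \<Rightarrow> fn" where
  "Lang sg u = (\<lambda>(t, r, th, ph). - (
       complex_of_real (1 / sin th) * pd 2 (\<lambda>(t', r', th', ph'). complex_of_real (sin th') * pd 2 u (t', r', th', ph')) (t, r, th, ph)
     + complex_of_real (1 / (sin th)^2) * pd 3 (pd 3 u) (t, r, th, ph)
     + complex_of_real sg * 4 * \<i> * complex_of_real (cos th / (sin th)^2) * pd 3 u (t, r, th, ph)
     - complex_of_real (4 * (cot th)^2) * u (t, r, th, ph)
     - 4 * u (t, r, th, ph)))"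

definition Teuk_plus :: "real \<Rightarrow> real \<Rightarrow> fn \<Rightarrow> fn" where
  "Teuk_plus M k u = (\<lambda>(t, r, th, ph).
       - Lop M k (Lbar M k u) (t, r, th, ph)
     + complex_of_real (2 * wprime M k r / wf M k r) * Lbar M k u (t, r, th, ph)
     - complex_of_real (wf M k r) * (Lang 1 u (t, r, th, ph) - 2 * u (t, r, th, ph)
           + complex_of_real (6 * M / r) * u (t, r, th, ph)))"

definition Teuk_minus :: "real \<Rightarrow> real \<Rightarrow> fn \<Rightarrow> fn" where
  "Teuk_minus M k u = (\<lambda>(t, r, th, ph).
       - Lop M k (Lbar M k u) (t, r, th, ph)
     - complex_of_real (2 * wprime M k r / wf M k r) * Lop M k u (t, r, th, ph)
     - complex_of_real (wf M k r) * (Lang (-1) u (t, r, th, ph) - 2 * u (t, r, th, ph)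
           + complex_of_real (6 * M / r) * u (t, r, th, ph)))"

end

theory Submission
  imports Defs
begin

lemma ev_simps[simp]: "ev 0 = (1,0,0,0)" "ev (Suc 0) = (0,1,0,0)" "ev 1 = (0,1,0,0)" "ev 2 = (0,0,1,0)" "ev 3 = (0,0,0,1)"
  by (simp_all add: ev_def)

lemma pt_add0[simp]: "(q::pt) + (0, 0, 0, 0) = q"
  by (metis add.right_neutral zero_prod_def)

lemma norm_ev[simp]: "norm (ev i) = 1"
  by (simp add: ev_def norm_Pair)

lemma line_has_deriv:
  assumes "(u has_derivative u') (at (a + sz *\<^sub>R ev i))"
  shows "((\<lambda>s. u (a + s *\<^sub>R ev i)) has_vector_derivative u' (ev i)) (at sz)"
proof -
  have l: "((\<lambda>s. a + s *\<^sub>R ev i) has_derivative (\<lambda>s. s *\<^sub>R ev i)) (at sz)"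
    by (auto intro!: derivative_eq_intros)
  have "((\<lambda>s. u (a + s *\<^sub>R ev i)) has_derivative (\<lambda>s. u' (s *\<^sub>R ev i))) (at sz)"
    by (rule has_derivative_compose[OF l]) (simp add: assms)
  moreover have "(\<lambda>s. u' (s *\<^sub>R ev i)) = (\<lambda>s. s *\<^sub>R u' (ev i))"
    using has_derivative_linear[OF assms] by (simp add: linear_scale)
  ultimately show ?thesis unfolding has_vector_derivative_def by simp
qed

lemma pd_eq:
  assumes "(u has_derivative u') (at q)"
  shows "pd i u q = u' (ev i)"
  unfolding pd_def
  by (rule vector_derivative_at, rule line_has_deriv[where sz=0, simplified], simp add: assms)

lemma line_has_pd:
  assumes "u differentiable (at (a + sz *\<^sub>R ev i))"
  shows "((\<lambda>s. u (a + s *\<^sub>R ev i)) has_vector_derivative pd i u (a + sz *\<^sub>R ev i)) (at sz)"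
proof -
  from assms obtain u' where u': "(u has_derivative u') (at (a + sz *\<^sub>R ev i))"
    unfolding differentiable_def by blast
  show ?thesis using line_has_deriv[OF u'] pd_eq[OF u'] by simp
qed

lemma line_has_pd0:
  assumes "u differentiable (at q)"
  shows "((\<lambda>s. u (q + s *\<^sub>R ev i)) has_vector_derivative pd i u q) (at 0)"
  using line_has_pd[of u q 0 i] assms by simp

lemma pd_local:
  assumes "open S" "p \<in> S" "\<And>q. q \<in> S \<Longrightarrow> f q = g q"
  shows "pd i f p = pd i g p"
proof -
  obtain e where e: "e > 0" "ball p e \<subseteq> S" using assms(1,2) open_contains_ball by blast
  have "eventually (\<lambda>s. s \<in> UNIV \<longrightarrow> f (p + s *\<^sub>R ev i) = g (p + s *\<^sub>R ev i)) (nhds (0::real))"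
    unfolding eventually_nhds_metric
  proof (intro exI[of _ e] conjI allI impI)
    fix s :: real assume "dist s 0 < e"
    hence "p + s *\<^sub>R ev i \<in> ball p e" by (simp add: dist_norm)
    hence "p + s *\<^sub>R ev i \<in> S" using e by blast
    thus "f (p + s *\<^sub>R ev i) = g (p + s *\<^sub>R ev i)" by (rule assms(3))
  qed (use e in auto)
  thus ?thesis unfolding pd_def by (intro vector_derivative_cong_eq) auto
qed

lemma fold_pd_local:
  assumes "open S" "\<And>q. q \<in> S \<Longrightarrow> f q = g q"
  shows "q \<in> S \<Longrightarrow> fold pd xs f q = fold pd xs g q"
  using assms(2)
proof (induction xs arbitrary: f g q)
  case Nil thus ?case by simp
next
  case (Cons i xs)
  have "\<And>q. q \<in> S \<Longrightarrow> pd i f q = pd i g q" using pd_local[OF assms(1)] Cons.prems(2) by blast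
  hence "fold pd xs (pd i f) q = fold pd xs (pd i g) q" using Cons.IH Cons.prems(1) by blast
  thus ?case by simp
qed

lemma open_exterior: "open (exterior M k)"
proof -
  have "exterior M k = {q. 0 < fst (snd q) \<and> 0 < Delta M k (fst (snd q)) \<and> 0 < fst (snd (snd q)) \<and> fst (snd (snd q)) < pi}"
    unfolding exterior_def by auto
  also have "open \<dots>" unfolding Delta_def
    by (intro open_Collect_conj open_Collect_less continuous_intros)
  finally show ?thesis .
qed

lemma schwarz_lim:
  fixes u :: fn
  assumes S: "open S" "p \<in> S" and du: "\<And>q. q \<in> S \<Longrightarrow> u differentiable (at q)"
    and D: "(pd i u has_derivative D) (at p)"
  shows "((\<lambda>h. (u (p + h *\<^sub>R ev j + h *\<^sub>R ev i) - u (p + h *\<^sub>R ev i) - u (p + h *\<^sub>R ev j) + u p)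
            / of_real (h^2)) \<longlongrightarrow> D (ev j)) (at 0)"
  unfolding LIM_eq
proof (intro allI impI)
  fix \<epsilon> :: real assume "0 < \<epsilon>"
  define e where "e = \<epsilon> / 10"
  have e: "0 < e" using \<open>0 < \<epsilon>\<close> by (simp add: e_def)
  have blD: "bounded_linear D" using D by (rule has_derivative_bounded_linear)
  then interpret D: bounded_linear D .
  obtain d1 where d1: "d1 > 0" "\<And>y. norm (y - p) < d1 \<Longrightarrow>
      norm (pd i u y - pd i u p - D (y - p)) \<le> e * norm (y - p)"
    using D e unfolding has_derivative_at_alt by blast
  obtain d2 where d2: "d2 > 0" "ball p d2 \<subseteq> S" using S open_contains_ball by blast
  define \<delta> where "\<delta> = min d1 d2 / 3"
  have \<delta>: "\<delta> > 0" using d1 d2 by (simp add: \<delta>_def)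
  show "\<exists>s>0. \<forall>h. h \<noteq> 0 \<and> norm (h - 0) < s \<longrightarrow>
          norm ((u (p + h *\<^sub>R ev j + h *\<^sub>R ev i) - u (p + h *\<^sub>R ev i) - u (p + h *\<^sub>R ev j) + u p)
            / of_real (h^2) - D (ev j)) < \<epsilon>"
  proof (intro exI[of _ \<delta>] conjI allI impI)
    show "\<delta> > 0" by (rule \<delta>)
    fix h :: real assume h: "h \<noteq> 0 \<and> norm (h - 0) < \<delta>"
    hence h0: "h \<noteq> 0" and hd: "\<bar>h\<bar> < \<delta>" by auto
    define G where "G y = pd i u y - pd i u p - D (y - p)" for y
    have Gb: "norm (G y) \<le> e * norm (y - p)" if "norm (y - p) \<le> 2 * \<bar>h\<bar>" for y
    proof -
      have "\<bar>h\<bar> * 3 < d1" using hd by (simp add: \<delta>_def)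
      hence "norm (y - p) < d1" using that abs_ge_zero[of h] by linarith
      thus ?thesis unfolding G_def using d1(2)[of y] by simp
    qed
    have inS: "y \<in> S" if "norm (y - p) \<le> 2 * \<bar>h\<bar>" for y
    proof -
      have "\<bar>h\<bar> * 3 < d2" using hd by (simp add: \<delta>_def)
      hence "dist p y < d2" using that abs_ge_zero[of h] by (simp add: dist_norm norm_minus_commute)
      thus ?thesis using d2 by auto
    qed
    define \<phi> where "\<phi> s = u (p + h *\<^sub>R ev j + s *\<^sub>R ev i) - u (p + s *\<^sub>R ev i)" for s
    define \<phi>' where "\<phi>' s = pd i u (p + h *\<^sub>R ev j + s *\<^sub>R ev i) - pd i u (p + s *\<^sub>R ev i)" for s
    have seg: "\<bar>s\<bar> \<le> \<bar>h\<bar>" if "s \<in> closed_segment 0 h" for s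
      using that by (auto simp: closed_segment_eq_real_ivl split: if_splits)
    have n1: "norm (p + h *\<^sub>R ev j + s *\<^sub>R ev i - p) \<le> 2 * \<bar>h\<bar>" if "\<bar>s\<bar> \<le> \<bar>h\<bar>" for s
    proof -
      have "norm (p + h *\<^sub>R ev j + s *\<^sub>R ev i - p) = norm (h *\<^sub>R ev j + s *\<^sub>R ev i)" by simp
      also have "\<dots> \<le> norm (h *\<^sub>R ev j) + norm (s *\<^sub>R ev i)" by (rule norm_triangle_ineq)
      also have "\<dots> \<le> 2 * \<bar>h\<bar>" using that by simp
      finally show ?thesis .
    qed
    have n2: "norm (p + s *\<^sub>R ev i - p) \<le> 2 * \<bar>h\<bar>" if "\<bar>s\<bar> \<le> \<bar>h\<bar>" for s
      using that by simp
    have n3: "norm (p + h *\<^sub>R ev j - p) \<le> 2 * \<bar>h\<bar>" by simp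
    have der: "(\<phi> has_vector_derivative \<phi>' s) (at s within closed_segment 0 h)"
      if "s \<in> closed_segment 0 h" for s
    proof -
      have s: "\<bar>s\<bar> \<le> \<bar>h\<bar>" using seg that .
      have a: "u differentiable (at (p + h *\<^sub>R ev j + s *\<^sub>R ev i))" using du inS n1 s by blast
      have b: "u differentiable (at (p + s *\<^sub>R ev i))" using du inS n2 s by blast
      have "(\<phi> has_vector_derivative \<phi>' s) (at s)"
        unfolding \<phi>_def[abs_def] \<phi>'_def
        by (intro has_vector_derivative_diff line_has_pd a b)
      thus ?thesis by (rule has_vector_derivative_at_within)
    qed
    have bnd: "norm (\<phi>' s - \<phi>' 0) \<le> 4 * e * \<bar>h\<bar>" if "s \<in> closed_segment 0 h" for s
    proof -
      have s: "\<bar>s\<bar> \<le> \<bar>h\<bar>" using seg that .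
      let ?y1 = "p + h *\<^sub>R ev j + s *\<^sub>R ev i" and ?y2 = "p + s *\<^sub>R ev i" and ?y3 = "p + h *\<^sub>R ev j"
      have eq: "\<phi>' s - \<phi>' 0 = G ?y1 - G ?y2 - G ?y3"
        unfolding \<phi>'_def G_def by (simp add: D.add D.diff algebra_simps)
      have "norm (G ?y1 - G ?y2 - G ?y3) \<le> norm (G ?y1 - G ?y2) + norm (G ?y3)"
        by (rule norm_triangle_ineq4)
      also have "\<dots> \<le> norm (G ?y1) + norm (G ?y2) + norm (G ?y3)"
        using norm_triangle_ineq4[of "G ?y1" "G ?y2"] by simp
      also have "\<dots> \<le> e * (2 * \<bar>h\<bar>) + e * \<bar>h\<bar> + e * \<bar>h\<bar>"
      proof -
        have "norm (G ?y1) \<le> e * (2 * \<bar>h\<bar>)"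
          by (rule order.trans[OF Gb[OF n1[OF s]] mult_left_mono[OF n1[OF s]]]) (use e in simp)
        moreover have "norm (G ?y2) \<le> e * \<bar>h\<bar>"
          by (rule order.trans[OF Gb[OF n2[OF s]]]) (use s e in simp)
        moreover have "norm (G ?y3) \<le> e * \<bar>h\<bar>" using Gb[OF n3] by simp
        ultimately show ?thesis by simp
      qed
      finally have "norm (G ?y1 - G ?y2 - G ?y3) \<le> 4 * e * \<bar>h\<bar>" by (simp add: algebra_simps)
      thus ?thesis unfolding eq .
    qed
    have mvt: "norm (\<phi> h - \<phi> 0 - (h - 0) *\<^sub>R \<phi>' 0) \<le> norm (h - 0) * (4 * e * \<bar>h\<bar>)"
      by (rule vector_differentiable_bound_linearization[where S="closed_segment 0 h"])
         (use der bnd in auto)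
    have p0: "\<phi>' 0 = h *\<^sub>R D (ev j) + G (p + h *\<^sub>R ev j)"
      unfolding \<phi>'_def G_def by (simp add: D.scaleR)
    have g3: "norm (G (p + h *\<^sub>R ev j)) \<le> e * \<bar>h\<bar>" using Gb[OF n3] by simp
    define \<Delta> where "\<Delta> = u (p + h *\<^sub>R ev j + h *\<^sub>R ev i) - u (p + h *\<^sub>R ev i) - u (p + h *\<^sub>R ev j) + u p"
    have "\<phi> h - \<phi> 0 = \<Delta>" unfolding \<phi>_def \<Delta>_def by simp
    hence "\<Delta> - h^2 *\<^sub>R D (ev j) = (\<phi> h - \<phi> 0 - h *\<^sub>R \<phi>' 0) + h *\<^sub>R G (p + h *\<^sub>R ev j)"
      using p0 by (simp add: algebra_simps power2_eq_square)
    hence "norm (\<Delta> - h^2 *\<^sub>R D (ev j)) \<le> norm (\<phi> h - \<phi> 0 - h *\<^sub>R \<phi>' 0) + \<bar>h\<bar> * norm (G (p + h *\<^sub>R ev j))"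
      by (metis norm_scaleR norm_triangle_ineq)
    also have "\<dots> \<le> \<bar>h\<bar> * (4 * e * \<bar>h\<bar>) + \<bar>h\<bar> * (e * \<bar>h\<bar>)"
      using mvt g3 by (intro add_mono mult_left_mono) auto
    also have "\<dots> = 5 * e * h^2" by (simp add: algebra_simps power2_eq_square)
    finally have nb: "norm (\<Delta> - h^2 *\<^sub>R D (ev j)) \<le> 5 * e * h^2" .
    have h2: "h^2 > 0" using h0 by simp
    have "\<Delta> / of_real (h^2) - D (ev j) = (\<Delta> - h^2 *\<^sub>R D (ev j)) / of_real (h^2)"
      using h2 by (simp add: field_simps scaleR_conv_of_real)
    hence "norm (\<Delta> / of_real (h^2) - D (ev j)) = norm (\<Delta> - h^2 *\<^sub>R D (ev j)) / h^2"
      by (simp add: norm_divide norm_power)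
    also have "\<dots> \<le> 5 * e" using nb h2 by (simp add: divide_le_eq)
    also have "\<dots> < \<epsilon>" using \<open>0 < \<epsilon>\<close> by (simp add: e_def)
    finally show "norm (\<Delta> / of_real (h^2) - D (ev j)) < \<epsilon>" unfolding \<Delta>_def .
  qed
qed

lemma schwarz:
  fixes u :: fn
  assumes S: "open S" "p \<in> S" and du: "\<And>q. q \<in> S \<Longrightarrow> u differentiable (at q)"
    and di: "pd i u differentiable (at p)" and dj: "pd j u differentiable (at p)"
  shows "pd j (pd i u) p = pd i (pd j u) p"
proof -
  obtain Di where Di: "(pd i u has_derivative Di) (at p)" using di unfolding differentiable_def by blast
  obtain Dj where Dj: "(pd j u has_derivative Dj) (at p)" using dj unfolding differentiable_def by blast
  note l1 = schwarz_lim[OF S du Di, of j]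
  note l2 = schwarz_lim[OF S du Dj, of i]
  have "(\<lambda>h. (u (p + h *\<^sub>R ev i + h *\<^sub>R ev j) - u (p + h *\<^sub>R ev j) - u (p + h *\<^sub>R ev i) + u p) / of_real (h^2))
      = (\<lambda>h. (u (p + h *\<^sub>R ev j + h *\<^sub>R ev i) - u (p + h *\<^sub>R ev i) - u (p + h *\<^sub>R ev j) + u p) / of_real (h^2))"
    by (simp add: algebra_simps)
  with l2 have l2': "((\<lambda>h. (u (p + h *\<^sub>R ev j + h *\<^sub>R ev i) - u (p + h *\<^sub>R ev i) - u (p + h *\<^sub>R ev j) + u p) / of_real (h^2)) \<longlongrightarrow> Dj (ev i)) (at 0)"
    by simp
  have "Di (ev j) = Dj (ev i)" using tendsto_unique[OF _ l1 l2'] by simp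
  thus ?thesis using pd_eq[OF Di] pd_eq[OF Dj] by simp
qed

lemma fold_pd_snoc[simp]: "fold pd (xs @ [i]) u = pd i (fold pd xs u)"
  by simp

declare fold_append[simp del]

lemma sm_fold: "smooth_on_pt S u \<Longrightarrow> smooth_on_pt S (fold pd \<beta> u)"
  unfolding smooth_on_pt_def by (metis fold_append comp_apply)

lemma sm_pd: "smooth_on_pt S u \<Longrightarrow> smooth_on_pt S (pd i u)"
  using sm_fold[of S u "[i]"] by simp

lemma sm_diff: "smooth_on_pt S u \<Longrightarrow> q \<in> S \<Longrightarrow> u differentiable (at q)"
  unfolding smooth_on_pt_def by (metis fold_Nil id_apply)

lemma sm_swap:
  assumes "open S" "smooth_on_pt S u" "q \<in> S"
  shows "pd j (pd i u) q = pd i (pd j u) q"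
  by (rule schwarz[OF assms(1,3)]) (use assms sm_diff sm_pd in blast)+

lemma fold_pd_insort:
  assumes S: "open S"
  shows "smooth_on_pt S u \<Longrightarrow> sorted ys \<Longrightarrow> q \<in> S \<Longrightarrow> fold pd (x # ys) u q = fold pd (insort x ys) u q"
proof (induction ys arbitrary: u q)
  case Nil thus ?case by simp
next
  case (Cons y ys)
  show ?case
  proof (cases "x \<le> y")
    case True thus ?thesis by simp
  next
    case False
    have "fold pd (x # y # ys) u q = fold pd ys (pd y (pd x u)) q" by simp
    also have "\<dots> = fold pd ys (pd x (pd y u)) q"
      by (rule fold_pd_local[OF S _ Cons.prems(3)]) (rule sm_swap[OF S Cons.prems(1)])
    also have "\<dots> = fold pd (x # ys) (pd y u) q" by simp
    also have "\<dots> = fold pd (insort x ys) (pd y u) q"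
      using Cons.IH[OF sm_pd[OF Cons.prems(1)] _ Cons.prems(3)] Cons.prems(2) by simp
    also have "\<dots> = fold pd (insort x (y # ys)) u q" using False by simp
    finally show ?thesis .
  qed
qed

lemma fold_pd_sort:
  assumes S: "open S"
  shows "smooth_on_pt S u \<Longrightarrow> q \<in> S \<Longrightarrow> fold pd xs u q = fold pd (sort xs) u q"
proof (induction xs arbitrary: u q)
  case Nil thus ?case by simp
next
  case (Cons x xs)
  have "fold pd (x # xs) u q = fold pd xs (pd x u) q" by simp
  also have "\<dots> = fold pd (sort xs) (pd x u) q"
    using Cons.IH[OF sm_pd[OF Cons.prems(1)] Cons.prems(2)] .
  also have "\<dots> = fold pd (x # sort xs) u q" by simp
  also have "\<dots> = fold pd (insort x (sort xs)) u q"
    by (rule fold_pd_insort[OF S Cons.prems(1) _ Cons.prems(2)]) simp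
  finally show ?case by simp
qed

type_synonym coefs = "((real \<Rightarrow> real) \<times> (real \<Rightarrow> real) \<times> nat list) list"

fun sumt :: "fn \<Rightarrow> coefs \<Rightarrow> pt \<Rightarrow> complex" where
  "sumt u [] q = 0"
| "sumt u ((c, c', \<beta>) # A) q = complex_of_real (c (fst (snd q))) * fold pd \<beta> u q + sumt u A q"

definition dd :: "nat \<Rightarrow> coefs \<Rightarrow> coefs" where
  "dd i A = map (\<lambda>(c,c',\<beta>). (c, c', \<beta> @ [i])) A"

fun d1 :: "coefs \<Rightarrow> coefs" where
  "d1 [] = []"
| "d1 ((c, c', \<beta>) # A) = (c', (\<lambda>_. 0), \<beta>) # (c, c', \<beta> @ [1]) # d1 A"

definition scl :: "(real \<Rightarrow> real) \<Rightarrow> coefs \<Rightarrow> coefs" where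
  "scl a A = map (\<lambda>(c,c',\<beta>). (\<lambda>r. a r * c r, \<lambda>_. 0, \<beta>)) A"

definition dok :: "coefs \<Rightarrow> real \<Rightarrow> bool" where
  "dok A r = (\<forall>(c,c',\<beta>)\<in>set A. (c has_real_derivative c' r) (at r))"

definition srt :: "coefs \<Rightarrow> coefs" where
  "srt A = map (\<lambda>(c,c',\<beta>). (c, c', sort \<beta>)) A"

fun cs :: "coefs \<Rightarrow> nat list \<Rightarrow> real \<Rightarrow> real" where
  "cs [] \<beta> r = 0"
| "cs ((c, c', \<beta>') # A) \<beta> r = (if \<beta>' = \<beta> then c r else 0) + cs A \<beta> r"

lemma dd_simps[simp]: "dd i [] = []" "dd i ((c,c',\<beta>) # A) = (c, c', \<beta> @ [i]) # dd i A"
  by (simp_all add: dd_def)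
lemma scl_simps[simp]: "scl a [] = []" "scl a ((c,c',\<beta>) # A) = (\<lambda>r. a r * c r, \<lambda>_. 0, \<beta>) # scl a A"
  by (simp_all add: scl_def)
lemma srt_simps[simp]: "srt [] = []" "srt ((c,c',\<beta>) # A) = (c, c', sort \<beta>) # srt A"
  by (simp_all add: srt_def)
lemma dok_simps[simp]: "dok [] r" "dok ((c,c',\<beta>) # A) r \<longleftrightarrow> (c has_real_derivative c' r) (at r) \<and> dok A r"
  by (simp_all add: dok_def)

lemma sumt_Cons': "sumt u (a # A) q = complex_of_real (fst a (fst (snd q))) * fold pd (snd (snd a)) u q + sumt u A q"
  by (cases a) auto

lemma sumt_append[simp]: "sumt u (A @ B) q = sumt u A q + sumt u B q"
  by (induction A) (auto simp: algebra_simps sumt_Cons')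

lemma scl_Cons': "scl a (x # A) = (\<lambda>r. a r * fst x r, \<lambda>_. 0, snd (snd x)) # scl a A"
  by (cases x) auto

lemma sumt_scl: "sumt u (scl a A) q = complex_of_real (a (fst (snd q))) * sumt u A q"
  by (induction A) (auto simp: algebra_simps sumt_Cons' scl_Cons')

lemma sumt_line_const:
  assumes i: "fst (snd (ev i)) = 0" and u: "smooth_on_pt S u" and q: "q \<in> S"
  shows "((\<lambda>s. sumt u A (q + s *\<^sub>R ev i)) has_vector_derivative sumt u (dd i A) q) (at 0)"
proof (induction A)
  case Nil thus ?case by (simp add: has_vector_derivative_const)
next
  case (Cons a A)
  obtain c c' \<beta> where a: "a = (c, c', \<beta>)" by (cases a) auto
  have F: "((\<lambda>s. fold pd \<beta> u (q + s *\<^sub>R ev i)) has_vector_derivative fold pd (\<beta> @ [i]) u q) (at 0)"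
    using line_has_pd0[OF sm_diff[OF sm_fold[OF u] q], where i=i] by simp
  have "((\<lambda>s. complex_of_real (c (fst (snd q))) * fold pd \<beta> u (q + s *\<^sub>R ev i) + sumt u A (q + s *\<^sub>R ev i))
      has_vector_derivative complex_of_real (c (fst (snd q))) * fold pd (\<beta> @ [i]) u q + sumt u (dd i A) q) (at 0)"
    by (intro has_vector_derivative_add has_vector_derivative_mult_right F Cons.IH)
  thus ?case using i by (simp add: a)
qed

lemma pd_sumt_const:
  assumes "fst (snd (ev i)) = 0" "smooth_on_pt S u" "q \<in> S"
  shows "pd i (sumt u A) q = sumt u (dd i A) q"
  unfolding pd_def by (rule vector_derivative_at, rule sumt_line_const[OF assms])

lemma sumt_line_1:
  assumes u: "smooth_on_pt S u" and q: "q \<in> S" and A: "dok A (fst (snd q))"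
  shows "((\<lambda>s. sumt u A (q + s *\<^sub>R ev 1)) has_vector_derivative sumt u (d1 A) q) (at 0)"
  using A
proof (induction A)
  case Nil thus ?case by (simp add: has_vector_derivative_const)
next
  case (Cons a A)
  obtain c c' \<beta> where a: "a = (c, c', \<beta>)" by (cases a) auto
  have cd: "(c has_real_derivative c' (fst (snd q))) (at (fst (snd q)))" and A: "dok A (fst (snd q))"
    using Cons.prems by (auto simp: a)
  have F: "((\<lambda>s. fold pd \<beta> u (q + s *\<^sub>R ev 1)) has_vector_derivative fold pd (\<beta> @ [1]) u q) (at 0)"
    using line_has_pd0[OF sm_diff[OF sm_fold[OF u] q], where i=1] by simp
  have "((\<lambda>s. c (s + fst (snd q))) has_real_derivative c' (fst (snd q))) (at 0)"
    using cd DERIV_shift[of c "c' (fst (snd q))" 0 "fst (snd q)"] by simp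
  hence C: "((\<lambda>s. complex_of_real (c (fst (snd q) + s))) has_vector_derivative complex_of_real (c' (fst (snd q)))) (at 0)"
    by (intro has_vector_derivative_of_real) (simp add: add.commute)
  have "((\<lambda>s. complex_of_real (c (fst (snd q) + s)) * fold pd \<beta> u (q + s *\<^sub>R ev 1) + sumt u A (q + s *\<^sub>R ev 1))
      has_vector_derivative (complex_of_real (c (fst (snd q) + 0)) * fold pd (\<beta> @ [1]) u q
         + complex_of_real (c' (fst (snd q))) * fold pd \<beta> u (q + 0 *\<^sub>R ev 1)) + sumt u (d1 A) q) (at 0)"
    by (intro has_vector_derivative_add has_vector_derivative_mult F C Cons.IH A)
  thus ?case by (simp add: a algebra_simps)
qed

lemma pd_sumt_1:
  assumes "smooth_on_pt S u" "q \<in> S" "dok A (fst (snd q))"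
  shows "pd 1 (sumt u A) q = sumt u (d1 A) q"
  unfolding pd_def by (rule vector_derivative_at, rule sumt_line_1[OF assms])

lemma sumt_sort:
  assumes "open S" "smooth_on_pt S u" "q \<in> S"
  shows "sumt u (srt A) q = sumt u A q"
proof (induction A)
  case (Cons a A) thus ?case by (cases a) (auto simp: fold_pd_sort[OF assms(1,2,3), symmetric])
qed simp

lemma sumt_cs:
  assumes "finite K" "set (map (snd \<circ> snd) A) \<subseteq> K"
  shows "sumt u A q = (\<Sum>\<beta>\<in>K. complex_of_real (cs A \<beta> (fst (snd q))) * fold pd \<beta> u q)"
  using assms(2)
proof (induction A)
  case Nil thus ?case by simp
next
  case (Cons a A)
  obtain c c' \<beta> where a: "a = (c, c', \<beta>)" by (cases a) auto
  have b: "\<beta> \<in> K" using Cons.prems by (simp add: a)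
  have "sumt u (a # A) q = complex_of_real (c (fst (snd q))) * fold pd \<beta> u q
        + (\<Sum>\<beta>\<in>K. complex_of_real (cs A \<beta> (fst (snd q))) * fold pd \<beta> u q)"
    using Cons by (simp add: a)
  also have "complex_of_real (c (fst (snd q))) * fold pd \<beta> u q
      = (\<Sum>\<gamma>\<in>K. complex_of_real (if \<beta> = \<gamma> then c (fst (snd q)) else 0) * fold pd \<gamma> u q)"
  proof -
    have "(\<Sum>\<gamma>\<in>K. complex_of_real (if \<beta> = \<gamma> then c (fst (snd q)) else 0) * fold pd \<gamma> u q)
        = (\<Sum>\<gamma>\<in>K. if \<beta> = \<gamma> then complex_of_real (c (fst (snd q))) * fold pd \<gamma> u q else 0)"
      by (intro sum.cong) auto
    also have "\<dots> = complex_of_real (c (fst (snd q))) * fold pd \<beta> u q"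
      using b assms(1) by (simp add: sum.delta)
    finally show ?thesis by simp
  qed
  finally show ?case by (simp add: a sum.distrib[symmetric] algebra_simps)
qed

lemma sumt_eq_cs:
  assumes "\<forall>\<beta>\<in>set (map (snd \<circ> snd) (A @ B)). cs A \<beta> (fst (snd q)) = cs B \<beta> (fst (snd q))"
  shows "sumt u A q = sumt u B q"
proof -
  let ?K = "set (map (snd \<circ> snd) (A @ B))"
  have "sumt u A q = (\<Sum>\<beta>\<in>?K. complex_of_real (cs A \<beta> (fst (snd q))) * fold pd \<beta> u q)"
    by (rule sumt_cs) auto
  also have "\<dots> = (\<Sum>\<beta>\<in>?K. complex_of_real (cs B \<beta> (fst (snd q))) * fold pd \<beta> u q)"
    using assms by (intro sum.cong) auto
  also have "\<dots> = sumt u B q" by (rule sumt_cs[symmetric]) auto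
  finally show ?thesis .
qed

lemma sumt_norm:
  assumes "open S" "smooth_on_pt S u" "q \<in> S"
    and "\<forall>\<beta>\<in>set (map (snd \<circ> snd) (srt A @ srt B)). cs (srt A) \<beta> (fst (snd q)) = cs (srt B) \<beta> (fst (snd q))"
  shows "sumt u A q = sumt u B q"
  using sumt_sort[OF assms(1-3), of A] sumt_sort[OF assms(1-3), of B] sumt_eq_cs[OF assms(4), of u] by simp

lemma pd_psi_0:
  assumes S: "open S" "q \<in> S" and u: "smooth_on_pt S u" and psi: "\<And>q. q \<in> S \<Longrightarrow> \<psi> q = sumt u A q"
  shows "pd 0 \<psi> q = sumt u (dd 0 A) q"
  using pd_local[OF S psi] pd_sumt_const[OF _ u S(2)] by simp

lemma pd_psi_1:
  assumes S: "open S" "q \<in> S" and u: "smooth_on_pt S u" and psi: "\<And>q. q \<in> S \<Longrightarrow> \<psi> q = sumt u A q"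
    and A: "dok A (fst (snd q))"
  shows "pd 1 \<psi> q = sumt u (d1 A) q"
  using pd_local[OF S psi] pd_sumt_1[OF u S(2) A] by simp

lemma op_winvL:
  assumes S: "open S" "q \<in> S" and u: "smooth_on_pt S u" and psi: "\<And>q. q \<in> S \<Longrightarrow> \<psi> q = sumt u A q"
    and A: "dok A (fst (snd q))"
  shows "winvL M k \<psi> q = sumt u (scl (\<lambda>r. 1 / wf M k r) (dd 0 A) @ scl (\<lambda>r. 1 / wf M k r * (Delta M k r / r^2)) (d1 A)) q"
proof -
  obtain t r th ph where q: "q = (t, r, th, ph)" by (cases q) auto
  have 0: "pd 0 \<psi> q = sumt u (dd 0 A) q" by (rule pd_psi_0[OF S u psi])
  have 1: "pd 1 \<psi> q = sumt u (d1 A) q" by (rule pd_psi_1[OF S u psi A])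
  show ?thesis using 0 1 by (simp add: winvL_def Lop_def q sumt_scl algebra_simps)
qed

lemma op_winvLbar:
  assumes S: "open S" "q \<in> S" and u: "smooth_on_pt S u" and psi: "\<And>q. q \<in> S \<Longrightarrow> \<psi> q = sumt u A q"
    and A: "dok A (fst (snd q))"
  shows "winvLbar M k \<psi> q = sumt u (scl (\<lambda>r. 1 / wf M k r) (dd 0 A) @ scl (\<lambda>r. - (1 / wf M k r * (Delta M k r / r^2))) (d1 A)) q"
proof -
  obtain t r th ph where q: "q = (t, r, th, ph)" by (cases q) auto
  have 0: "pd 0 \<psi> q = sumt u (dd 0 A) q" by (rule pd_psi_0[OF S u psi])
  have 1: "pd 1 \<psi> q = sumt u (d1 A) q" by (rule pd_psi_1[OF S u psi A])
  show ?thesis using 0 1 by (simp add: winvLbar_def Lbar_def q sumt_scl algebra_simps)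
qed

lemma op_Lop:
  assumes S: "open S" "q \<in> S" and u: "smooth_on_pt S u" and psi: "\<And>q. q \<in> S \<Longrightarrow> \<psi> q = sumt u A q"
    and A: "dok A (fst (snd q))"
  shows "Lop M k \<psi> q = sumt u (scl (\<lambda>r. 1) (dd 0 A) @ scl (\<lambda>r. Delta M k r / r^2) (d1 A)) q"
proof -
  obtain t r th ph where q: "q = (t, r, th, ph)" by (cases q) auto
  have 0: "pd 0 \<psi> q = sumt u (dd 0 A) q" by (rule pd_psi_0[OF S u psi])
  have 1: "pd 1 \<psi> q = sumt u (d1 A) q" by (rule pd_psi_1[OF S u psi A])
  show ?thesis using 0 1 by (simp add: Lop_def q sumt_scl algebra_simps)
qed

lemma op_Lbar:
  assumes S: "open S" "q \<in> S" and u: "smooth_on_pt S u" and psi: "\<And>q. q \<in> S \<Longrightarrow> \<psi> q = sumt u A q"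
    and A: "dok A (fst (snd q))"
  shows "Lbar M k \<psi> q = sumt u (scl (\<lambda>r. 1) (dd 0 A) @ scl (\<lambda>r. - (Delta M k r / r^2)) (d1 A)) q"
proof -
  obtain t r th ph where q: "q = (t, r, th, ph)" by (cases q) auto
  have 0: "pd 0 \<psi> q = sumt u (dd 0 A) q" by (rule pd_psi_0[OF S u psi])
  have 1: "pd 1 \<psi> q = sumt u (d1 A) q" by (rule pd_psi_1[OF S u psi A])
  show ?thesis using 0 1 by (simp add: Lbar_def q sumt_scl algebra_simps)
qed

definition app :: "nat list \<Rightarrow> coefs \<Rightarrow> coefs" where
  "app \<gamma> A = map (\<lambda>(c,c',\<beta>). (c, c', \<beta> @ \<gamma>)) A"

lemma app_simps[simp]: "app \<gamma> [] = []" "app \<gamma> ((c,c',\<beta>) # A) = (c, c', \<beta> @ \<gamma>) # app \<gamma> A"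
  by (simp_all add: app_def)

lemma app_Nil[simp]: "app [] A = A"
  by (induction A) (auto simp: app_def)

lemma app_app[simp]: "app \<delta> (app \<gamma> A) = app (\<gamma> @ \<delta>) A"
  by (induction A) (auto simp: app_def)

lemma dd_app: "dd i (app \<gamma> A) = app (\<gamma> @ [i]) A" "dd i A = app [i] A"
  by (induction A) (auto simp: app_def dd_def)

definition AngE :: "real \<Rightarrow> (nat list \<Rightarrow> fn) \<Rightarrow> fn" where
  "AngE sg F q = - (complex_of_real (cos (fst (snd (snd q))) / sin (fst (snd (snd q)))) * F [2] q
      + F [2,2] q + complex_of_real (1 / (sin (fst (snd (snd q))))^2) * F [3,3] q
      + complex_of_real sg * 4 * \<i> * complex_of_real (cos (fst (snd (snd q))) / (sin (fst (snd (snd q))))^2) * F [3] q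
      - complex_of_real (4 * (cot (fst (snd (snd q))))^2) * F [] q - 4 * F [] q)"

lemma Lang_sumt:
  assumes q: "q \<in> exterior M k" and u: "smooth_on_pt (exterior M k) u"
  shows "Lang sg (sumt u A) q = AngE sg (\<lambda>\<gamma>. sumt u (app \<gamma> A)) q"
proof -
  let ?E = "exterior M k"
  have S: "open ?E" by (rule open_exterior)
  obtain t r th ph where qq: "q = (t, r, th, ph)" by (cases q) auto
  have th: "0 < th" "th < pi" using q by (auto simp: qq exterior_def)
  have sn: "sin th \<noteq> 0" using sin_gt_zero[OF th] by simp
  have p3: "\<And>q. q \<in> ?E \<Longrightarrow> pd 3 (sumt u A) q = sumt u (app [3] A) q"
    using pd_sumt_const[OF _ u] by (simp add: dd_app)
  have "pd 3 (pd 3 (sumt u A)) q = pd 3 (sumt u (app [3] A)) q"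
    by (rule pd_local[OF S q]) (rule p3)
  hence p33: "pd 3 (pd 3 (sumt u A)) q = sumt u (app [3,3] A) q"
    using pd_sumt_const[OF _ u q, of 3 "app [3] A"] by (simp add: dd_app)
  have inner: "\<And>q'. q' \<in> ?E \<Longrightarrow> (\<lambda>(t', r', th', ph'). complex_of_real (sin th') * pd 2 (sumt u A) (t', r', th', ph')) q'
       = complex_of_real (sin (fst (snd (snd q')))) * sumt u (app [2] A) q'"
  proof -
    fix q' assume "q' \<in> ?E"
    thus "?thesis q'" using pd_sumt_const[OF _ u, of 2 q' A] by (cases q') (simp add: dd_app)
  qed
  have L2: "((\<lambda>s. sumt u (app [2] A) (q + s *\<^sub>R ev 2)) has_vector_derivative sumt u (app [2,2] A) q) (at 0)"
    using sumt_line_const[OF _ u q, of 2 "app [2] A"] by (simp add: dd_app)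
  have "((\<lambda>s. sin (s + th)) has_real_derivative cos th) (at 0)"
    using DERIV_shift[of sin "cos th" 0 th] DERIV_sin[of th] by simp
  hence Ls: "((\<lambda>s. complex_of_real (sin (th + s))) has_vector_derivative complex_of_real (cos th)) (at 0)"
    by (intro has_vector_derivative_of_real) (simp add: add.commute)
  have "((\<lambda>s. complex_of_real (sin (th + s)) * sumt u (app [2] A) (q + s *\<^sub>R ev 2)) has_vector_derivative
        complex_of_real (sin (th + 0)) * sumt u (app [2,2] A) q + complex_of_real (cos th) * sumt u (app [2] A) (q + 0 *\<^sub>R ev 2)) (at 0)"
    by (intro has_vector_derivative_mult Ls L2)
  hence "pd 2 (\<lambda>q'. complex_of_real (sin (fst (snd (snd q')))) * sumt u (app [2] A) q') q
      = complex_of_real (sin th) * sumt u (app [2,2] A) q + complex_of_real (cos th) * sumt u (app [2] A) q"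
    unfolding pd_def by (intro vector_derivative_at) (simp add: qq)
  hence p22: "pd 2 (\<lambda>(t', r', th', ph'). complex_of_real (sin th') * pd 2 (sumt u A) (t', r', th', ph')) q
      = complex_of_real (sin th) * sumt u (app [2,2] A) q + complex_of_real (cos th) * sumt u (app [2] A) q"
    using pd_local[OF S q, of _ _ 2, OF inner] by simp
  have p3': "pd 3 (sumt u A) q = sumt u (app [3] A) q" using p3 q by blast
  show ?thesis
    unfolding AngE_def using sn
    by (simp add: Lang_def qq p22[unfolded qq] p33[unfolded qq] p3'[unfolded qq] field_simps)
qed

lemma sumt_single_fun: "sumt u [(\<lambda>_. 1, c', \<beta>)] = fold pd \<beta> u"
  by (rule ext) simp

lemma Lang_fold:
  assumes q: "q \<in> exterior M k" and u: "smooth_on_pt (exterior M k) u"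
  shows "Lang sg (fold pd \<beta> u) q = AngE sg (\<lambda>\<gamma>. fold pd (\<beta> @ \<gamma>) u) q"
  using Lang_sumt[OF q u, of sg "[(\<lambda>_. 1, \<lambda>_. 0, \<beta>)]"] by (simp add: sumt_single_fun)

lemma pd_AngE:
  assumes i: "i = 0 \<or> i = 1" and F: "\<And>\<gamma>. F \<gamma> differentiable (at q)"
  shows "pd i (AngE sg F) q = AngE sg (\<lambda>\<gamma>. pd i (F \<gamma>)) q"
proof -
  have th: "\<And>s. fst (snd (snd (q + s *\<^sub>R ev i))) = fst (snd (snd q))" using i by auto
  have l: "\<And>\<gamma>. ((\<lambda>s. F \<gamma> (q + s *\<^sub>R ev i)) has_vector_derivative pd i (F \<gamma>) q) (at 0)"
    by (rule line_has_pd0[OF F])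
  show ?thesis
    unfolding pd_def[of i "AngE sg F"] AngE_def th
    by (intro vector_derivative_at has_vector_derivative_minus has_vector_derivative_diff
        has_vector_derivative_add has_vector_derivative_mult_right l)
qed

lemma fold_Lang_comm0:
  assumes u: "smooth_on_pt (exterior M k) u"
  shows "set \<beta> \<subseteq> {0, 1} \<Longrightarrow> q \<in> exterior M k \<Longrightarrow> fold pd \<beta> (Lang sg u) q = AngE sg (\<lambda>\<gamma>. fold pd (\<gamma> @ \<beta>) u) q"
proof (induction \<beta> arbitrary: q rule: rev_induct)
  case Nil thus ?case using Lang_fold[OF Nil(2) u, of sg "[]"] by simp
next
  case (snoc i \<beta>)
  have S: "open (exterior M k)" by (rule open_exterior)
  have "fold pd (\<beta> @ [i]) (Lang sg u) q = pd i (fold pd \<beta> (Lang sg u)) q" by simp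
  also have "\<dots> = pd i (AngE sg (\<lambda>\<gamma>. fold pd (\<gamma> @ \<beta>) u)) q"
    by (rule pd_local[OF S snoc.prems(2)]) (use snoc in auto)
  also have "\<dots> = AngE sg (\<lambda>\<gamma>. pd i (fold pd (\<gamma> @ \<beta>) u)) q"
    by (rule pd_AngE) (use snoc.prems sm_diff[OF sm_fold[OF u]] in auto)
  also have "\<dots> = AngE sg (\<lambda>\<gamma>. fold pd (\<gamma> @ \<beta> @ [i]) u) q"
    by (simp only: append_assoc[symmetric] fold_pd_snoc)
  finally show ?case .
qed

lemma fold_perm:
  assumes "open S" "smooth_on_pt S u" "q \<in> S" "mset xs = mset ys"
  shows "fold pd xs u q = fold pd ys u q"
proof -
  have "sort xs = sort ys" using assms(4)
    by (metis properties_for_sort sorted_sort mset_sort)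
  thus ?thesis using fold_pd_sort[OF assms(1-3), of xs] fold_pd_sort[OF assms(1-3), of ys] by simp
qed

lemma Lang_comm:
  assumes u: "smooth_on_pt (exterior M k) u" and b: "set \<beta> \<subseteq> {0, 1}" and q: "q \<in> exterior M k"
  shows "Lang sg (fold pd \<beta> u) q = fold pd \<beta> (Lang sg u) q"
proof -
  have "\<And>\<gamma>. fold pd (\<beta> @ \<gamma>) u q = fold pd (\<gamma> @ \<beta>) u q"
    by (rule fold_perm[OF open_exterior u q]) (simp add: union_commute)
  hence "AngE sg (\<lambda>\<gamma>. fold pd (\<beta> @ \<gamma>) u) q = AngE sg (\<lambda>\<gamma>. fold pd (\<gamma> @ \<beta>) u) q"
    unfolding AngE_def by (simp only:)
  thus ?thesis using Lang_fold[OF q u] fold_Lang_comm0[OF u b q] by simp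
qed

lemma AngE_0: "AngE sg (\<lambda>\<gamma> q. 0) q = 0"
  by (simp add: AngE_def)

lemma Lang_sumt_comm:
  assumes u: "smooth_on_pt (exterior M k) u" and q: "q \<in> exterior M k"
    and A: "\<forall>(c,c',\<beta>)\<in>set A. set \<beta> \<subseteq> {0, 1}"
  shows "Lang sg (sumt u A) q = sumt (Lang sg u) A q"
proof -
  have "AngE sg (\<lambda>\<gamma>. sumt u (app \<gamma> A)) q = sumt (Lang sg u) A q"
    using A
  proof (induction A)
    case Nil thus ?case using AngE_0[of sg q] by (simp add: AngE_def)
  next
    case (Cons a A)
    obtain c c' \<beta> where a: "a = (c, c', \<beta>)" by (cases a) auto
    have b: "set \<beta> \<subseteq> {0,1}" using Cons.prems a by auto
    have "AngE sg (\<lambda>\<gamma>. sumt u (app \<gamma> (a # A))) q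
        = complex_of_real (c (fst (snd q))) * AngE sg (\<lambda>\<gamma>. fold pd (\<beta> @ \<gamma>) u) q
                    + AngE sg (\<lambda>\<gamma>. sumt u (app \<gamma> A)) q"
      by (simp add: a AngE_def algebra_simps add_divide_distrib)
    also have "AngE sg (\<lambda>\<gamma>. fold pd (\<beta> @ \<gamma>) u) q = fold pd \<beta> (Lang sg u) q"
      using Lang_fold[OF q u] Lang_comm[OF u b q] by simp
    finally show ?case using Cons by (simp add: a)
  qed
  thus ?thesis using Lang_sumt[OF q u] by simp
qed

lemma Lang_local:
  assumes q: "q \<in> exterior M k" and fg: "\<And>q. q \<in> exterior M k \<Longrightarrow> f q = g q"
  shows "Lang sg f q = Lang sg g q"
proof -
  have S: "open (exterior M k)" by (rule open_exterior)
  obtain t r th ph where qq: "q = (t, r, th, ph)" by (cases q) auto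
  have p2: "\<And>q. q \<in> exterior M k \<Longrightarrow> pd 2 f q = pd 2 g q" using pd_local[where f=f and g=g, OF S _ fg] by blast
  have p3: "\<And>q. q \<in> exterior M k \<Longrightarrow> pd 3 f q = pd 3 g q" using pd_local[where f=f and g=g, OF S _ fg] by blast
  have i: "\<And>q'. q' \<in> exterior M k \<Longrightarrow> (\<lambda>(t', r', th', ph'). complex_of_real (sin th') * pd 2 f (t', r', th', ph')) q'
      = (\<lambda>(t', r', th', ph'). complex_of_real (sin th') * pd 2 g (t', r', th', ph')) q'"
    using p2 by auto
  have a: "pd 2 (\<lambda>(t', r', th', ph'). complex_of_real (sin th') * pd 2 f (t', r', th', ph')) q
      = pd 2 (\<lambda>(t', r', th', ph'). complex_of_real (sin th') * pd 2 g (t', r', th', ph')) q"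
    using pd_local[OF S q, of _ _ 2, OF i] .
  have b: "pd 3 (pd 3 f) q = pd 3 (pd 3 g) q" using pd_local[OF S q, of _ _ 3, OF p3] .
  show ?thesis using a b p3[OF q] fg[OF q] by (simp add: Lang_def qq)
qed

lemma DERIV_rat:
  assumes N: "(N has_real_derivative N') (at r)" and r: "0 < r" and D: "0 < Delta M k r"
    and eq: "D' = (N' * r * Delta M k r - real a * N r * Delta M k r - real b * N r * (2*r + 4*k^2*r^3 - 2*M) * r)
                 / (r^(a+1) * Delta M k r^(b+1))"
  shows "((\<lambda>r. N r / (r^a * Delta M k r ^ b)) has_real_derivative D') (at r)"
proof -
  have dD: "((\<lambda>r. Delta M k r) has_real_derivative (2*r + 4*k^2*r^3 - 2*M)) (at r)"
    unfolding Delta_def by (auto intro!: derivative_eq_intros simp: algebra_simps)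
  have ea: "real a * r^(a - Suc 0) = real a * r^a / r"
    using r by (cases a) auto
  have eb: "real b * Delta M k r^(b - Suc 0) = real b * Delta M k r^b / Delta M k r"
    using D by (cases b) auto
  have eb': "real b * (X * Delta M k r^(b - Suc 0)) = real b * X * Delta M k r^b / Delta M k r" for X
    using eb by (simp add: algebra_simps)
  have p1: "0 < b \<Longrightarrow> Delta M k r * Delta M k r ^ (b - Suc 0) = Delta M k r ^ b"
    by (cases b) auto
  have p2: "0 < a \<Longrightarrow> r * r ^ (a - Suc 0) = r ^ a"
    by (cases a) auto
  show ?thesis
    using r D p1 p2 by (auto intro!: derivative_eq_intros N dD simp: eq ea eb eb' field_simps power_add)
qed

definition A0 :: coefs where "A0 = [(\<lambda>_. 1, \<lambda>_. 0, [])]"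

lemma sumt_A0: "sumt u A0 q = u q" by (simp add: A0_def)
lemma dok_A0: "dok A0 r" by (simp add: A0_def)

lemma wprime_eq:
  assumes r: "0 < r"
  shows "wprime M k r = Delta M k r / r^2 * (-2 / r^3 + 6 * M / r^4)"
proof -
  have "(wf M k has_real_derivative (-2 / r^3 + 6 * M / r^4)) (at r)"
  proof -
    have e: "wf M k = (\<lambda>r. (r^2 + k^2 * r^4 - 2 * M * r) / r^4)"
      by (rule ext) (simp add: wf_def Delta_def)
    show ?thesis unfolding e using r
      by (auto intro!: derivative_eq_intros simp: field_simps power_eq_if)
  qed
  thus ?thesis unfolding wprime_def by (simp add: DERIV_imp_deriv)
qed

definition LB :: "real \<Rightarrow> real \<Rightarrow> coefs" where
  "LB M k = [((\<lambda>r. (1) / (r ^ 0 * Delta M k r ^ 0)),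
    (\<lambda>r. (0 * r * Delta M k r - real 0 * (1) * Delta M k r - real 0 * (1) * (2*r + 4*k^2*r^3 - 2*M) * r) / (r ^ (0 + 1) * Delta M k r ^ (0 + 1))),
    [0]),
   ((\<lambda>r. (- (r^3 * k^2) - r + 2 * M) / (r ^ 1 * Delta M k r ^ 0)),
    (\<lambda>r. ((- (3 * r^2 * k^2) - 1) * r * Delta M k r - real 1 * (- (r^3 * k^2) - r + 2 * M) * Delta M k r - real 0 * (- (r^3 * k^2) - r + 2 * M) * (2*r + 4*k^2*r^3 - 2*M) * r) / (r ^ (1 + 1) * Delta M k r ^ (0 + 1))),
    [1])]"

definition LP :: "real \<Rightarrow> real \<Rightarrow> coefs" where
  "LP M k = [((\<lambda>r. (1) / (r ^ 0 * Delta M k r ^ 0)),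
    (\<lambda>r. (0 * r * Delta M k r - real 0 * (1) * Delta M k r - real 0 * (1) * (2*r + 4*k^2*r^3 - 2*M) * r) / (r ^ (0 + 1) * Delta M k r ^ (0 + 1))),
    [0]),
   ((\<lambda>r. (r^3 * k^2 + r - 2 * M) / (r ^ 1 * Delta M k r ^ 0)),
    (\<lambda>r. ((3 * r^2 * k^2 + 1) * r * Delta M k r - real 1 * (r^3 * k^2 + r - 2 * M) * Delta M k r - real 0 * (r^3 * k^2 + r - 2 * M) * (2*r + 4*k^2*r^3 - 2*M) * r) / (r ^ (1 + 1) * Delta M k r ^ (0 + 1))),
    [1])]"

definition B1 :: "real \<Rightarrow> real \<Rightarrow> coefs" where
  "B1 M k = [((\<lambda>r. (r^4) / (r ^ 0 * Delta M k r ^ 1)),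
    (\<lambda>r. ((4 * r^3) * r * Delta M k r - real 0 * (r^4) * Delta M k r - real 1 * (r^4) * (2*r + 4*k^2*r^3 - 2*M) * r) / (r ^ (0 + 1) * Delta M k r ^ (1 + 1))),
    [0]),
   ((\<lambda>r. (- (r^2)) / (r ^ 0 * Delta M k r ^ 0)),
    (\<lambda>r. ((- (2 * r)) * r * Delta M k r - real 0 * (- (r^2)) * Delta M k r - real 0 * (- (r^2)) * (2*r + 4*k^2*r^3 - 2*M) * r) / (r ^ (0 + 1) * Delta M k r ^ (0 + 1))),
    [1])]"

definition B2 :: "real \<Rightarrow> real \<Rightarrow> coefs" where
  "B2 M k = [((\<lambda>r. (- (2 * r^7) + 6 * r^6 * M) / (r ^ 0 * Delta M k r ^ 2)),
    (\<lambda>r. ((- (14 * r^6) + 36 * r^5 * M) * r * Delta M k r - real 0 * (- (2 * r^7) + 6 * r^6 * M) * Delta M k r - real 2 * (- (2 * r^7) + 6 * r^6 * M) * (2*r + 4*k^2*r^3 - 2*M) * r) / (r ^ (0 + 1) * Delta M k r ^ (2 + 1))),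
    [0]),
   ((\<lambda>r. (2 * r^3) / (r ^ 0 * Delta M k r ^ 0)),
    (\<lambda>r. ((6 * r^2) * r * Delta M k r - real 0 * (2 * r^3) * Delta M k r - real 0 * (2 * r^3) * (2*r + 4*k^2*r^3 - 2*M) * r) / (r ^ (0 + 1) * Delta M k r ^ (0 + 1))),
    [1]),
   ((\<lambda>r. (r^8) / (r ^ 0 * Delta M k r ^ 2)),
    (\<lambda>r. ((8 * r^7) * r * Delta M k r - real 0 * (r^8) * Delta M k r - real 2 * (r^8) * (2*r + 4*k^2*r^3 - 2*M) * r) / (r ^ (0 + 1) * Delta M k r ^ (2 + 1))),
    [0,0]),
   ((\<lambda>r. (- (2 * r^6)) / (r ^ 0 * Delta M k r ^ 1)),
    (\<lambda>r. ((- (12 * r^5)) * r * Delta M k r - real 0 * (- (2 * r^6)) * Delta M k r - real 1 * (- (2 * r^6)) * (2*r + 4*k^2*r^3 - 2*M) * r) / (r ^ (0 + 1) * Delta M k r ^ (1 + 1))),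
    [0,1]),
   ((\<lambda>r. (r^4) / (r ^ 0 * Delta M k r ^ 0)),
    (\<lambda>r. ((4 * r^3) * r * Delta M k r - real 0 * (r^4) * Delta M k r - real 0 * (r^4) * (2*r + 4*k^2*r^3 - 2*M) * r) / (r ^ (0 + 1) * Delta M k r ^ (0 + 1))),
    [1,1])]"

definition B3 :: "real \<Rightarrow> real \<Rightarrow> coefs" where
  "B3 M k = [((\<lambda>r. (2 * r^12 * k^2 - 12 * r^11 * M * k^2 - 6 * r^10 + 32 * r^9 * M - 48 * r^8 * M^2) / (r ^ 0 * Delta M k r ^ 3)),
    (\<lambda>r. ((24 * r^11 * k^2 - 132 * r^10 * M * k^2 - 60 * r^9 + 288 * r^8 * M - 384 * r^7 * M^2) * r * Delta M k r - real 0 * (2 * r^12 * k^2 - 12 * r^11 * M * k^2 - 6 * r^10 + 32 * r^9 * M - 48 * r^8 * M^2) * Delta M k r - real 3 * (2 * r^12 * k^2 - 12 * r^11 * M * k^2 - 6 * r^10 + 32 * r^9 * M - 48 * r^8 * M^2) * (2*r + 4*k^2*r^3 - 2*M) * r) / (r ^ (0 + 1) * Delta M k r ^ (3 + 1))),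
    [0]),
   ((\<lambda>r. (6 * r^4) / (r ^ 0 * Delta M k r ^ 0)),
    (\<lambda>r. ((24 * r^3) * r * Delta M k r - real 0 * (6 * r^4) * Delta M k r - real 0 * (6 * r^4) * (2*r + 4*k^2*r^3 - 2*M) * r) / (r ^ (0 + 1) * Delta M k r ^ (0 + 1))),
    [1]),
   ((\<lambda>r. (2 * r^11 - 6 * r^10 * M) / (r ^ 0 * Delta M k r ^ 3)),
    (\<lambda>r. ((22 * r^10 - 60 * r^9 * M) * r * Delta M k r - real 0 * (2 * r^11 - 6 * r^10 * M) * Delta M k r - real 3 * (2 * r^11 - 6 * r^10 * M) * (2*r + 4*k^2*r^3 - 2*M) * r) / (r ^ (0 + 1) * Delta M k r ^ (3 + 1))),
    [0,0]),
   ((\<lambda>r. (- (2 * r^11 * k^2) - 8 * r^9 + 22 * r^8 * M) / (r ^ 0 * Delta M k r ^ 2)),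
    (\<lambda>r. ((- (22 * r^10 * k^2) - 72 * r^8 + 176 * r^7 * M) * r * Delta M k r - real 0 * (- (2 * r^11 * k^2) - 8 * r^9 + 22 * r^8 * M) * Delta M k r - real 2 * (- (2 * r^11 * k^2) - 8 * r^9 + 22 * r^8 * M) * (2*r + 4*k^2*r^3 - 2*M) * r) / (r ^ (0 + 1) * Delta M k r ^ (2 + 1))),
    [0,1]),
   ((\<lambda>r. (6 * r^5) / (r ^ 0 * Delta M k r ^ 0)),
    (\<lambda>r. ((30 * r^4) * r * Delta M k r - real 0 * (6 * r^5) * Delta M k r - real 0 * (6 * r^5) * (2*r + 4*k^2*r^3 - 2*M) * r) / (r ^ (0 + 1) * Delta M k r ^ (0 + 1))),
    [1,1]),
   ((\<lambda>r. (r^12) / (r ^ 0 * Delta M k r ^ 3)),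
    (\<lambda>r. ((12 * r^11) * r * Delta M k r - real 0 * (r^12) * Delta M k r - real 3 * (r^12) * (2*r + 4*k^2*r^3 - 2*M) * r) / (r ^ (0 + 1) * Delta M k r ^ (3 + 1))),
    [0,0,0]),
   ((\<lambda>r. (- (r^10)) / (r ^ 0 * Delta M k r ^ 2)),
    (\<lambda>r. ((- (10 * r^9)) * r * Delta M k r - real 0 * (- (r^10)) * Delta M k r - real 2 * (- (r^10)) * (2*r + 4*k^2*r^3 - 2*M) * r) / (r ^ (0 + 1) * Delta M k r ^ (2 + 1))),
    [0,0,1]),
   ((\<lambda>r. (- (r^8)) / (r ^ 0 * Delta M k r ^ 1)),
    (\<lambda>r. ((- (8 * r^7)) * r * Delta M k r - real 0 * (- (r^8)) * Delta M k r - real 1 * (- (r^8)) * (2*r + 4*k^2*r^3 - 2*M) * r) / (r ^ (0 + 1) * Delta M k r ^ (1 + 1))),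
    [0,1,1]),
   ((\<lambda>r. (r^6) / (r ^ 0 * Delta M k r ^ 0)),
    (\<lambda>r. ((6 * r^5) * r * Delta M k r - real 0 * (r^6) * Delta M k r - real 0 * (r^6) * (2*r + 4*k^2*r^3 - 2*M) * r) / (r ^ (0 + 1) * Delta M k r ^ (0 + 1))),
    [1,1,1])]"

definition C1 :: "real \<Rightarrow> real \<Rightarrow> coefs" where
  "C1 M k = [((\<lambda>r. (r^4) / (r ^ 0 * Delta M k r ^ 1)),
    (\<lambda>r. ((4 * r^3) * r * Delta M k r - real 0 * (r^4) * Delta M k r - real 1 * (r^4) * (2*r + 4*k^2*r^3 - 2*M) * r) / (r ^ (0 + 1) * Delta M k r ^ (1 + 1))),
    [0]),
   ((\<lambda>r. (r^2) / (r ^ 0 * Delta M k r ^ 0)),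
    (\<lambda>r. ((2 * r) * r * Delta M k r - real 0 * (r^2) * Delta M k r - real 0 * (r^2) * (2*r + 4*k^2*r^3 - 2*M) * r) / (r ^ (0 + 1) * Delta M k r ^ (0 + 1))),
    [1])]"

definition C2 :: "real \<Rightarrow> real \<Rightarrow> coefs" where
  "C2 M k = [((\<lambda>r. (2 * r^7 - 6 * r^6 * M) / (r ^ 0 * Delta M k r ^ 2)),
    (\<lambda>r. ((14 * r^6 - 36 * r^5 * M) * r * Delta M k r - real 0 * (2 * r^7 - 6 * r^6 * M) * Delta M k r - real 2 * (2 * r^7 - 6 * r^6 * M) * (2*r + 4*k^2*r^3 - 2*M) * r) / (r ^ (0 + 1) * Delta M k r ^ (2 + 1))),
    [0]),
   ((\<lambda>r. (2 * r^3) / (r ^ 0 * Delta M k r ^ 0)),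
    (\<lambda>r. ((6 * r^2) * r * Delta M k r - real 0 * (2 * r^3) * Delta M k r - real 0 * (2 * r^3) * (2*r + 4*k^2*r^3 - 2*M) * r) / (r ^ (0 + 1) * Delta M k r ^ (0 + 1))),
    [1]),
   ((\<lambda>r. (r^8) / (r ^ 0 * Delta M k r ^ 2)),
    (\<lambda>r. ((8 * r^7) * r * Delta M k r - real 0 * (r^8) * Delta M k r - real 2 * (r^8) * (2*r + 4*k^2*r^3 - 2*M) * r) / (r ^ (0 + 1) * Delta M k r ^ (2 + 1))),
    [0,0]),
   ((\<lambda>r. (2 * r^6) / (r ^ 0 * Delta M k r ^ 1)),
    (\<lambda>r. ((12 * r^5) * r * Delta M k r - real 0 * (2 * r^6) * Delta M k r - real 1 * (2 * r^6) * (2*r + 4*k^2*r^3 - 2*M) * r) / (r ^ (0 + 1) * Delta M k r ^ (1 + 1))),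
    [0,1]),
   ((\<lambda>r. (r^4) / (r ^ 0 * Delta M k r ^ 0)),
    (\<lambda>r. ((4 * r^3) * r * Delta M k r - real 0 * (r^4) * Delta M k r - real 0 * (r^4) * (2*r + 4*k^2*r^3 - 2*M) * r) / (r ^ (0 + 1) * Delta M k r ^ (0 + 1))),
    [1,1])]"

definition C3 :: "real \<Rightarrow> real \<Rightarrow> coefs" where
  "C3 M k = [((\<lambda>r. (2 * r^12 * k^2 - 12 * r^11 * M * k^2 - 6 * r^10 + 32 * r^9 * M - 48 * r^8 * M^2) / (r ^ 0 * Delta M k r ^ 3)),
    (\<lambda>r. ((24 * r^11 * k^2 - 132 * r^10 * M * k^2 - 60 * r^9 + 288 * r^8 * M - 384 * r^7 * M^2) * r * Delta M k r - real 0 * (2 * r^12 * k^2 - 12 * r^11 * M * k^2 - 6 * r^10 + 32 * r^9 * M - 48 * r^8 * M^2) * Delta M k r - real 3 * (2 * r^12 * k^2 - 12 * r^11 * M * k^2 - 6 * r^10 + 32 * r^9 * M - 48 * r^8 * M^2) * (2*r + 4*k^2*r^3 - 2*M) * r) / (r ^ (0 + 1) * Delta M k r ^ (3 + 1))),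
    [0]),
   ((\<lambda>r. (- (6 * r^4)) / (r ^ 0 * Delta M k r ^ 0)),
    (\<lambda>r. ((- (24 * r^3)) * r * Delta M k r - real 0 * (- (6 * r^4)) * Delta M k r - real 0 * (- (6 * r^4)) * (2*r + 4*k^2*r^3 - 2*M) * r) / (r ^ (0 + 1) * Delta M k r ^ (0 + 1))),
    [1]),
   ((\<lambda>r. (- (2 * r^11) + 6 * r^10 * M) / (r ^ 0 * Delta M k r ^ 3)),
    (\<lambda>r. ((- (22 * r^10) + 60 * r^9 * M) * r * Delta M k r - real 0 * (- (2 * r^11) + 6 * r^10 * M) * Delta M k r - real 3 * (- (2 * r^11) + 6 * r^10 * M) * (2*r + 4*k^2*r^3 - 2*M) * r) / (r ^ (0 + 1) * Delta M k r ^ (3 + 1))),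
    [0,0]),
   ((\<lambda>r. (- (2 * r^11 * k^2) - 8 * r^9 + 22 * r^8 * M) / (r ^ 0 * Delta M k r ^ 2)),
    (\<lambda>r. ((- (22 * r^10 * k^2) - 72 * r^8 + 176 * r^7 * M) * r * Delta M k r - real 0 * (- (2 * r^11 * k^2) - 8 * r^9 + 22 * r^8 * M) * Delta M k r - real 2 * (- (2 * r^11 * k^2) - 8 * r^9 + 22 * r^8 * M) * (2*r + 4*k^2*r^3 - 2*M) * r) / (r ^ (0 + 1) * Delta M k r ^ (2 + 1))),
    [0,1]),
   ((\<lambda>r. (- (6 * r^5)) / (r ^ 0 * Delta M k r ^ 0)),
    (\<lambda>r. ((- (30 * r^4)) * r * Delta M k r - real 0 * (- (6 * r^5)) * Delta M k r - real 0 * (- (6 * r^5)) * (2*r + 4*k^2*r^3 - 2*M) * r) / (r ^ (0 + 1) * Delta M k r ^ (0 + 1))),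
    [1,1]),
   ((\<lambda>r. (r^12) / (r ^ 0 * Delta M k r ^ 3)),
    (\<lambda>r. ((12 * r^11) * r * Delta M k r - real 0 * (r^12) * Delta M k r - real 3 * (r^12) * (2*r + 4*k^2*r^3 - 2*M) * r) / (r ^ (0 + 1) * Delta M k r ^ (3 + 1))),
    [0,0,0]),
   ((\<lambda>r. (r^10) / (r ^ 0 * Delta M k r ^ 2)),
    (\<lambda>r. ((10 * r^9) * r * Delta M k r - real 0 * (r^10) * Delta M k r - real 2 * (r^10) * (2*r + 4*k^2*r^3 - 2*M) * r) / (r ^ (0 + 1) * Delta M k r ^ (2 + 1))),
    [0,0,1]),
   ((\<lambda>r. (- (r^8)) / (r ^ 0 * Delta M k r ^ 1)),
    (\<lambda>r. ((- (8 * r^7)) * r * Delta M k r - real 0 * (- (r^8)) * Delta M k r - real 1 * (- (r^8)) * (2*r + 4*k^2*r^3 - 2*M) * r) / (r ^ (0 + 1) * Delta M k r ^ (1 + 1))),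
    [0,1,1]),
   ((\<lambda>r. (- (r^6)) / (r ^ 0 * Delta M k r ^ 0)),
    (\<lambda>r. ((- (6 * r^5)) * r * Delta M k r - real 0 * (- (r^6)) * Delta M k r - real 0 * (- (r^6)) * (2*r + 4*k^2*r^3 - 2*M) * r) / (r ^ (0 + 1) * Delta M k r ^ (0 + 1))),
    [1,1,1])]"

definition Rl :: "real \<Rightarrow> real \<Rightarrow> coefs" where
  "Rl M k = [((\<lambda>r. (2 * r - 6 * M) / (r ^ 1 * Delta M k r ^ 0)),
    (\<lambda>r. ((2) * r * Delta M k r - real 1 * (2 * r - 6 * M) * Delta M k r - real 0 * (2 * r - 6 * M) * (2*r + 4*k^2*r^3 - 2*M) * r) / (r ^ (1 + 1) * Delta M k r ^ (0 + 1))),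
    []),
   ((\<lambda>r. (- (4 * r^3) + 12 * r^2 * M) / (r ^ 0 * Delta M k r ^ 1)),
    (\<lambda>r. ((- (12 * r^2) + 24 * r * M) * r * Delta M k r - real 0 * (- (4 * r^3) + 12 * r^2 * M) * Delta M k r - real 1 * (- (4 * r^3) + 12 * r^2 * M) * (2*r + 4*k^2*r^3 - 2*M) * r) / (r ^ (0 + 1) * Delta M k r ^ (1 + 1))),
    [0]),
   ((\<lambda>r. (2 * r^3 * k^2 + 4 * r - 10 * M) / (r ^ 0 * Delta M k r ^ 0)),
    (\<lambda>r. ((6 * r^2 * k^2 + 4) * r * Delta M k r - real 0 * (2 * r^3 * k^2 + 4 * r - 10 * M) * Delta M k r - real 0 * (2 * r^3 * k^2 + 4 * r - 10 * M) * (2*r + 4*k^2*r^3 - 2*M) * r) / (r ^ (0 + 1) * Delta M k r ^ (0 + 1))),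
    [1]),
   ((\<lambda>r. (- (r^4)) / (r ^ 0 * Delta M k r ^ 1)),
    (\<lambda>r. ((- (4 * r^3)) * r * Delta M k r - real 0 * (- (r^4)) * Delta M k r - real 1 * (- (r^4)) * (2*r + 4*k^2*r^3 - 2*M) * r) / (r ^ (0 + 1) * Delta M k r ^ (1 + 1))),
    [0,0]),
   ((\<lambda>r. (r^4 * k^2 + r^2 - 2 * r * M) / (r ^ 0 * Delta M k r ^ 0)),
    (\<lambda>r. ((4 * r^3 * k^2 + 2 * r - 2 * M) * r * Delta M k r - real 0 * (r^4 * k^2 + r^2 - 2 * r * M) * Delta M k r - real 0 * (r^4 * k^2 + r^2 - 2 * r * M) * (2*r + 4*k^2*r^3 - 2*M) * r) / (r ^ (0 + 1) * Delta M k r ^ (0 + 1))),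
    [1,1])]"

definition Rm :: "real \<Rightarrow> real \<Rightarrow> coefs" where
  "Rm M k = [((\<lambda>r. (2 * r - 6 * M) / (r ^ 1 * Delta M k r ^ 0)),
    (\<lambda>r. ((2) * r * Delta M k r - real 1 * (2 * r - 6 * M) * Delta M k r - real 0 * (2 * r - 6 * M) * (2*r + 4*k^2*r^3 - 2*M) * r) / (r ^ (1 + 1) * Delta M k r ^ (0 + 1))),
    []),
   ((\<lambda>r. (4 * r^3 - 12 * r^2 * M) / (r ^ 0 * Delta M k r ^ 1)),
    (\<lambda>r. ((12 * r^2 - 24 * r * M) * r * Delta M k r - real 0 * (4 * r^3 - 12 * r^2 * M) * Delta M k r - real 1 * (4 * r^3 - 12 * r^2 * M) * (2*r + 4*k^2*r^3 - 2*M) * r) / (r ^ (0 + 1) * Delta M k r ^ (1 + 1))),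
    [0]),
   ((\<lambda>r. (2 * r^3 * k^2 + 4 * r - 10 * M) / (r ^ 0 * Delta M k r ^ 0)),
    (\<lambda>r. ((6 * r^2 * k^2 + 4) * r * Delta M k r - real 0 * (2 * r^3 * k^2 + 4 * r - 10 * M) * Delta M k r - real 0 * (2 * r^3 * k^2 + 4 * r - 10 * M) * (2*r + 4*k^2*r^3 - 2*M) * r) / (r ^ (0 + 1) * Delta M k r ^ (0 + 1))),
    [1]),
   ((\<lambda>r. (- (r^4)) / (r ^ 0 * Delta M k r ^ 1)),
    (\<lambda>r. ((- (4 * r^3)) * r * Delta M k r - real 0 * (- (r^4)) * Delta M k r - real 1 * (- (r^4)) * (2*r + 4*k^2*r^3 - 2*M) * r) / (r ^ (0 + 1) * Delta M k r ^ (1 + 1))),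
    [0,0]),
   ((\<lambda>r. (r^4 * k^2 + r^2 - 2 * r * M) / (r ^ 0 * Delta M k r ^ 0)),
    (\<lambda>r. ((4 * r^3 * k^2 + 2 * r - 2 * M) * r * Delta M k r - real 0 * (r^4 * k^2 + r^2 - 2 * r * M) * Delta M k r - real 0 * (r^4 * k^2 + r^2 - 2 * r * M) * (2*r + 4*k^2*r^3 - 2*M) * r) / (r ^ (0 + 1) * Delta M k r ^ (0 + 1))),
    [1,1])]"

definition P1 :: "real \<Rightarrow> real \<Rightarrow> coefs" where
  "P1 M k = [((\<lambda>r. (6 * M) / (r ^ 2 * Delta M k r ^ 0)),
    (\<lambda>r. (0 * r * Delta M k r - real 2 * (6 * M) * Delta M k r - real 0 * (6 * M) * (2*r + 4*k^2*r^3 - 2*M) * r) / (r ^ (2 + 1) * Delta M k r ^ (0 + 1))),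
    []),
   ((\<lambda>r. (4 * r^6 * k^2 - 24 * r^5 * M * k^2 - 4 * r^4 + 16 * r^3 * M - 24 * r^2 * M^2) / (r ^ 0 * Delta M k r ^ 2)),
    (\<lambda>r. ((24 * r^5 * k^2 - 120 * r^4 * M * k^2 - 16 * r^3 + 48 * r^2 * M - 48 * r * M^2) * r * Delta M k r - real 0 * (4 * r^6 * k^2 - 24 * r^5 * M * k^2 - 4 * r^4 + 16 * r^3 * M - 24 * r^2 * M^2) * Delta M k r - real 2 * (4 * r^6 * k^2 - 24 * r^5 * M * k^2 - 4 * r^4 + 16 * r^3 * M - 24 * r^2 * M^2) * (2*r + 4*k^2*r^3 - 2*M) * r) / (r ^ (0 + 1) * Delta M k r ^ (2 + 1))),
    [0]),
   ((\<lambda>r. (6 * r^3 * k^2 + 6 * r - 6 * M) / (r ^ 1 * Delta M k r ^ 0)),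
    (\<lambda>r. ((18 * r^2 * k^2 + 6) * r * Delta M k r - real 1 * (6 * r^3 * k^2 + 6 * r - 6 * M) * Delta M k r - real 0 * (6 * r^3 * k^2 + 6 * r - 6 * M) * (2*r + 4*k^2*r^3 - 2*M) * r) / (r ^ (1 + 1) * Delta M k r ^ (0 + 1))),
    [1]),
   ((\<lambda>r. (- (2 * r^5) + 6 * r^4 * M) / (r ^ 0 * Delta M k r ^ 2)),
    (\<lambda>r. ((- (10 * r^4) + 24 * r^3 * M) * r * Delta M k r - real 0 * (- (2 * r^5) + 6 * r^4 * M) * Delta M k r - real 2 * (- (2 * r^5) + 6 * r^4 * M) * (2*r + 4*k^2*r^3 - 2*M) * r) / (r ^ (0 + 1) * Delta M k r ^ (2 + 1))),
    [0,0]),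
   ((\<lambda>r. (- (4 * r^3) + 12 * r^2 * M) / (r ^ 0 * Delta M k r ^ 1)),
    (\<lambda>r. ((- (12 * r^2) + 24 * r * M) * r * Delta M k r - real 0 * (- (4 * r^3) + 12 * r^2 * M) * Delta M k r - real 1 * (- (4 * r^3) + 12 * r^2 * M) * (2*r + 4*k^2*r^3 - 2*M) * r) / (r ^ (0 + 1) * Delta M k r ^ (1 + 1))),
    [0,1]),
   ((\<lambda>r. (6 * r^3 * k^2 + 6 * r - 12 * M) / (r ^ 0 * Delta M k r ^ 0)),
    (\<lambda>r. ((18 * r^2 * k^2 + 6) * r * Delta M k r - real 0 * (6 * r^3 * k^2 + 6 * r - 12 * M) * Delta M k r - real 0 * (6 * r^3 * k^2 + 6 * r - 12 * M) * (2*r + 4*k^2*r^3 - 2*M) * r) / (r ^ (0 + 1) * Delta M k r ^ (0 + 1))),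
    [1,1]),
   ((\<lambda>r. (- (r^4)) / (r ^ 0 * Delta M k r ^ 1)),
    (\<lambda>r. ((- (4 * r^3)) * r * Delta M k r - real 0 * (- (r^4)) * Delta M k r - real 1 * (- (r^4)) * (2*r + 4*k^2*r^3 - 2*M) * r) / (r ^ (0 + 1) * Delta M k r ^ (1 + 1))),
    [0,0,1]),
   ((\<lambda>r. (r^4 * k^2 + r^2 - 2 * r * M) / (r ^ 0 * Delta M k r ^ 0)),
    (\<lambda>r. ((4 * r^3 * k^2 + 2 * r - 2 * M) * r * Delta M k r - real 0 * (r^4 * k^2 + r^2 - 2 * r * M) * Delta M k r - real 0 * (r^4 * k^2 + r^2 - 2 * r * M) * (2*r + 4*k^2*r^3 - 2*M) * r) / (r ^ (0 + 1) * Delta M k r ^ (0 + 1))),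
    [1,1,1])]"

definition Q1 :: "real \<Rightarrow> real \<Rightarrow> coefs" where
  "Q1 M k = [((\<lambda>r. (6 * M) / (r ^ 2 * Delta M k r ^ 0)),
    (\<lambda>r. (0 * r * Delta M k r - real 2 * (6 * M) * Delta M k r - real 0 * (6 * M) * (2*r + 4*k^2*r^3 - 2*M) * r) / (r ^ (2 + 1) * Delta M k r ^ (0 + 1))),
    []),
   ((\<lambda>r. (- (4 * r^6 * k^2) + 24 * r^5 * M * k^2 + 4 * r^4 - 16 * r^3 * M + 24 * r^2 * M^2) / (r ^ 0 * Delta M k r ^ 2)),
    (\<lambda>r. ((- (24 * r^5 * k^2) + 120 * r^4 * M * k^2 + 16 * r^3 - 48 * r^2 * M + 48 * r * M^2) * r * Delta M k r - real 0 * (- (4 * r^6 * k^2) + 24 * r^5 * M * k^2 + 4 * r^4 - 16 * r^3 * M + 24 * r^2 * M^2) * Delta M k r - real 2 * (- (4 * r^6 * k^2) + 24 * r^5 * M * k^2 + 4 * r^4 - 16 * r^3 * M + 24 * r^2 * M^2) * (2*r + 4*k^2*r^3 - 2*M) * r) / (r ^ (0 + 1) * Delta M k r ^ (2 + 1))),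
    [0]),
   ((\<lambda>r. (6 * r^3 * k^2 + 6 * r - 6 * M) / (r ^ 1 * Delta M k r ^ 0)),
    (\<lambda>r. ((18 * r^2 * k^2 + 6) * r * Delta M k r - real 1 * (6 * r^3 * k^2 + 6 * r - 6 * M) * Delta M k r - real 0 * (6 * r^3 * k^2 + 6 * r - 6 * M) * (2*r + 4*k^2*r^3 - 2*M) * r) / (r ^ (1 + 1) * Delta M k r ^ (0 + 1))),
    [1]),
   ((\<lambda>r. (- (2 * r^5) + 6 * r^4 * M) / (r ^ 0 * Delta M k r ^ 2)),
    (\<lambda>r. ((- (10 * r^4) + 24 * r^3 * M) * r * Delta M k r - real 0 * (- (2 * r^5) + 6 * r^4 * M) * Delta M k r - real 2 * (- (2 * r^5) + 6 * r^4 * M) * (2*r + 4*k^2*r^3 - 2*M) * r) / (r ^ (0 + 1) * Delta M k r ^ (2 + 1))),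
    [0,0]),
   ((\<lambda>r. (4 * r^3 - 12 * r^2 * M) / (r ^ 0 * Delta M k r ^ 1)),
    (\<lambda>r. ((12 * r^2 - 24 * r * M) * r * Delta M k r - real 0 * (4 * r^3 - 12 * r^2 * M) * Delta M k r - real 1 * (4 * r^3 - 12 * r^2 * M) * (2*r + 4*k^2*r^3 - 2*M) * r) / (r ^ (0 + 1) * Delta M k r ^ (1 + 1))),
    [0,1]),
   ((\<lambda>r. (6 * r^3 * k^2 + 6 * r - 12 * M) / (r ^ 0 * Delta M k r ^ 0)),
    (\<lambda>r. ((18 * r^2 * k^2 + 6) * r * Delta M k r - real 0 * (6 * r^3 * k^2 + 6 * r - 12 * M) * Delta M k r - real 0 * (6 * r^3 * k^2 + 6 * r - 12 * M) * (2*r + 4*k^2*r^3 - 2*M) * r) / (r ^ (0 + 1) * Delta M k r ^ (0 + 1))),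
    [1,1]),
   ((\<lambda>r. (- (r^4)) / (r ^ 0 * Delta M k r ^ 1)),
    (\<lambda>r. ((- (4 * r^3)) * r * Delta M k r - real 0 * (- (r^4)) * Delta M k r - real 1 * (- (r^4)) * (2*r + 4*k^2*r^3 - 2*M) * r) / (r ^ (0 + 1) * Delta M k r ^ (1 + 1))),
    [0,0,1]),
   ((\<lambda>r. (r^4 * k^2 + r^2 - 2 * r * M) / (r ^ 0 * Delta M k r ^ 0)),
    (\<lambda>r. ((4 * r^3 * k^2 + 2 * r - 2 * M) * r * Delta M k r - real 0 * (r^4 * k^2 + r^2 - 2 * r * M) * Delta M k r - real 0 * (r^4 * k^2 + r^2 - 2 * r * M) * (2*r + 4*k^2*r^3 - 2*M) * r) / (r ^ (0 + 1) * Delta M k r ^ (0 + 1))),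
    [1,1,1])]"

definition P2 :: "real \<Rightarrow> real \<Rightarrow> coefs" where
  "P2 M k = [((\<lambda>r. (- (12 * M)) / (r ^ 3 * Delta M k r ^ 0)),
    (\<lambda>r. (0 * r * Delta M k r - real 3 * (- (12 * M)) * Delta M k r - real 0 * (- (12 * M)) * (2*r + 4*k^2*r^3 - 2*M) * r) / (r ^ (3 + 1) * Delta M k r ^ (0 + 1))),
    []),
   ((\<lambda>r. (- (8 * r^9 * k^4) + 72 * r^8 * M * k^4 + 24 * r^7 * k^2 - 136 * r^6 * M * k^2 + 288 * r^5 * M^2 * k^2 + 16 * r^3 * M^2) / (r ^ 0 * Delta M k r ^ 3)),
    (\<lambda>r. ((- (72 * r^8 * k^4) + 576 * r^7 * M * k^4 + 168 * r^6 * k^2 - 816 * r^5 * M * k^2 + 1440 * r^4 * M^2 * k^2 + 48 * r^2 * M^2) * r * Delta M k r - real 0 * (- (8 * r^9 * k^4) + 72 * r^8 * M * k^4 + 24 * r^7 * k^2 - 136 * r^6 * M * k^2 + 288 * r^5 * M^2 * k^2 + 16 * r^3 * M^2) * Delta M k r - real 3 * (- (8 * r^9 * k^4) + 72 * r^8 * M * k^4 + 24 * r^7 * k^2 - 136 * r^6 * M * k^2 + 288 * r^5 * M^2 * k^2 + 16 * r^3 * M^2) * (2*r + 4*k^2*r^3 - 2*M) * r) / (r ^ (0 + 1) * Delta M k r ^ (3 + 1))),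
    [0]),
   ((\<lambda>r. (12 * r^3 * k^2 + 12 * M) / (r ^ 2 * Delta M k r ^ 0)),
    (\<lambda>r. ((36 * r^2 * k^2) * r * Delta M k r - real 2 * (12 * r^3 * k^2 + 12 * M) * Delta M k r - real 0 * (12 * r^3 * k^2 + 12 * M) * (2*r + 4*k^2*r^3 - 2*M) * r) / (r ^ (2 + 1) * Delta M k r ^ (0 + 1))),
    [1]),
   ((\<lambda>r. (6 * r^8 * k^2 - 24 * r^7 * M * k^2 - 2 * r^6 + 12 * r^5 * M - 24 * r^4 * M^2) / (r ^ 0 * Delta M k r ^ 3)),
    (\<lambda>r. ((48 * r^7 * k^2 - 168 * r^6 * M * k^2 - 12 * r^5 + 60 * r^4 * M - 96 * r^3 * M^2) * r * Delta M k r - real 0 * (6 * r^8 * k^2 - 24 * r^7 * M * k^2 - 2 * r^6 + 12 * r^5 * M - 24 * r^4 * M^2) * Delta M k r - real 3 * (6 * r^8 * k^2 - 24 * r^7 * M * k^2 - 2 * r^6 + 12 * r^5 * M - 24 * r^4 * M^2) * (2*r + 4*k^2*r^3 - 2*M) * r) / (r ^ (0 + 1) * Delta M k r ^ (3 + 1))),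
    [0,0]),
   ((\<lambda>r. (8 * r^6 * k^2 - 48 * r^5 * M * k^2 - 8 * r^4 + 32 * r^3 * M - 48 * r^2 * M^2) / (r ^ 0 * Delta M k r ^ 2)),
    (\<lambda>r. ((48 * r^5 * k^2 - 240 * r^4 * M * k^2 - 32 * r^3 + 96 * r^2 * M - 96 * r * M^2) * r * Delta M k r - real 0 * (8 * r^6 * k^2 - 48 * r^5 * M * k^2 - 8 * r^4 + 32 * r^3 * M - 48 * r^2 * M^2) * Delta M k r - real 2 * (8 * r^6 * k^2 - 48 * r^5 * M * k^2 - 8 * r^4 + 32 * r^3 * M - 48 * r^2 * M^2) * (2*r + 4*k^2*r^3 - 2*M) * r) / (r ^ (0 + 1) * Delta M k r ^ (2 + 1))),
    [0,1]),
   ((\<lambda>r. (24 * r^3 * k^2 + 12 * r - 6 * M) / (r ^ 1 * Delta M k r ^ 0)),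
    (\<lambda>r. ((72 * r^2 * k^2 + 12) * r * Delta M k r - real 1 * (24 * r^3 * k^2 + 12 * r - 6 * M) * Delta M k r - real 0 * (24 * r^3 * k^2 + 12 * r - 6 * M) * (2*r + 4*k^2*r^3 - 2*M) * r) / (r ^ (1 + 1) * Delta M k r ^ (0 + 1))),
    [1,1]),
   ((\<lambda>r. (- (4 * r^5) + 12 * r^4 * M) / (r ^ 0 * Delta M k r ^ 2)),
    (\<lambda>r. ((- (20 * r^4) + 48 * r^3 * M) * r * Delta M k r - real 0 * (- (4 * r^5) + 12 * r^4 * M) * Delta M k r - real 2 * (- (4 * r^5) + 12 * r^4 * M) * (2*r + 4*k^2*r^3 - 2*M) * r) / (r ^ (0 + 1) * Delta M k r ^ (2 + 1))),
    [0,0,1]),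
   ((\<lambda>r. (- (4 * r^3) + 12 * r^2 * M) / (r ^ 0 * Delta M k r ^ 1)),
    (\<lambda>r. ((- (12 * r^2) + 24 * r * M) * r * Delta M k r - real 0 * (- (4 * r^3) + 12 * r^2 * M) * Delta M k r - real 1 * (- (4 * r^3) + 12 * r^2 * M) * (2*r + 4*k^2*r^3 - 2*M) * r) / (r ^ (0 + 1) * Delta M k r ^ (1 + 1))),
    [0,1,1]),
   ((\<lambda>r. (10 * r^3 * k^2 + 8 * r - 14 * M) / (r ^ 0 * Delta M k r ^ 0)),
    (\<lambda>r. ((30 * r^2 * k^2 + 8) * r * Delta M k r - real 0 * (10 * r^3 * k^2 + 8 * r - 14 * M) * Delta M k r - real 0 * (10 * r^3 * k^2 + 8 * r - 14 * M) * (2*r + 4*k^2*r^3 - 2*M) * r) / (r ^ (0 + 1) * Delta M k r ^ (0 + 1))),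
    [1,1,1]),
   ((\<lambda>r. (- (r^4)) / (r ^ 0 * Delta M k r ^ 1)),
    (\<lambda>r. ((- (4 * r^3)) * r * Delta M k r - real 0 * (- (r^4)) * Delta M k r - real 1 * (- (r^4)) * (2*r + 4*k^2*r^3 - 2*M) * r) / (r ^ (0 + 1) * Delta M k r ^ (1 + 1))),
    [0,0,1,1]),
   ((\<lambda>r. (r^4 * k^2 + r^2 - 2 * r * M) / (r ^ 0 * Delta M k r ^ 0)),
    (\<lambda>r. ((4 * r^3 * k^2 + 2 * r - 2 * M) * r * Delta M k r - real 0 * (r^4 * k^2 + r^2 - 2 * r * M) * Delta M k r - real 0 * (r^4 * k^2 + r^2 - 2 * r * M) * (2*r + 4*k^2*r^3 - 2*M) * r) / (r ^ (0 + 1) * Delta M k r ^ (0 + 1))),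
    [1,1,1,1])]"

definition Q2 :: "real \<Rightarrow> real \<Rightarrow> coefs" where
  "Q2 M k = [((\<lambda>r. (- (12 * M)) / (r ^ 3 * Delta M k r ^ 0)),
    (\<lambda>r. (0 * r * Delta M k r - real 3 * (- (12 * M)) * Delta M k r - real 0 * (- (12 * M)) * (2*r + 4*k^2*r^3 - 2*M) * r) / (r ^ (3 + 1) * Delta M k r ^ (0 + 1))),
    []),
   ((\<lambda>r. (8 * r^9 * k^4 - 72 * r^8 * M * k^4 - 24 * r^7 * k^2 + 136 * r^6 * M * k^2 - 288 * r^5 * M^2 * k^2 - 16 * r^3 * M^2) / (r ^ 0 * Delta M k r ^ 3)),
    (\<lambda>r. ((72 * r^8 * k^4 - 576 * r^7 * M * k^4 - 168 * r^6 * k^2 + 816 * r^5 * M * k^2 - 1440 * r^4 * M^2 * k^2 - 48 * r^2 * M^2) * r * Delta M k r - real 0 * (8 * r^9 * k^4 - 72 * r^8 * M * k^4 - 24 * r^7 * k^2 + 136 * r^6 * M * k^2 - 288 * r^5 * M^2 * k^2 - 16 * r^3 * M^2) * Delta M k r - real 3 * (8 * r^9 * k^4 - 72 * r^8 * M * k^4 - 24 * r^7 * k^2 + 136 * r^6 * M * k^2 - 288 * r^5 * M^2 * k^2 - 16 * r^3 * M^2) * (2*r + 4*k^2*r^3 - 2*M) * r) / (r ^ (0 + 1) * Delta M k r ^ (3 + 1))),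
    [0]),
   ((\<lambda>r. (12 * r^3 * k^2 + 12 * M) / (r ^ 2 * Delta M k r ^ 0)),
    (\<lambda>r. ((36 * r^2 * k^2) * r * Delta M k r - real 2 * (12 * r^3 * k^2 + 12 * M) * Delta M k r - real 0 * (12 * r^3 * k^2 + 12 * M) * (2*r + 4*k^2*r^3 - 2*M) * r) / (r ^ (2 + 1) * Delta M k r ^ (0 + 1))),
    [1]),
   ((\<lambda>r. (6 * r^8 * k^2 - 24 * r^7 * M * k^2 - 2 * r^6 + 12 * r^5 * M - 24 * r^4 * M^2) / (r ^ 0 * Delta M k r ^ 3)),
    (\<lambda>r. ((48 * r^7 * k^2 - 168 * r^6 * M * k^2 - 12 * r^5 + 60 * r^4 * M - 96 * r^3 * M^2) * r * Delta M k r - real 0 * (6 * r^8 * k^2 - 24 * r^7 * M * k^2 - 2 * r^6 + 12 * r^5 * M - 24 * r^4 * M^2) * Delta M k r - real 3 * (6 * r^8 * k^2 - 24 * r^7 * M * k^2 - 2 * r^6 + 12 * r^5 * M - 24 * r^4 * M^2) * (2*r + 4*k^2*r^3 - 2*M) * r) / (r ^ (0 + 1) * Delta M k r ^ (3 + 1))),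
    [0,0]),
   ((\<lambda>r. (- (8 * r^6 * k^2) + 48 * r^5 * M * k^2 + 8 * r^4 - 32 * r^3 * M + 48 * r^2 * M^2) / (r ^ 0 * Delta M k r ^ 2)),
    (\<lambda>r. ((- (48 * r^5 * k^2) + 240 * r^4 * M * k^2 + 32 * r^3 - 96 * r^2 * M + 96 * r * M^2) * r * Delta M k r - real 0 * (- (8 * r^6 * k^2) + 48 * r^5 * M * k^2 + 8 * r^4 - 32 * r^3 * M + 48 * r^2 * M^2) * Delta M k r - real 2 * (- (8 * r^6 * k^2) + 48 * r^5 * M * k^2 + 8 * r^4 - 32 * r^3 * M + 48 * r^2 * M^2) * (2*r + 4*k^2*r^3 - 2*M) * r) / (r ^ (0 + 1) * Delta M k r ^ (2 + 1))),
    [0,1]),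
   ((\<lambda>r. (24 * r^3 * k^2 + 12 * r - 6 * M) / (r ^ 1 * Delta M k r ^ 0)),
    (\<lambda>r. ((72 * r^2 * k^2 + 12) * r * Delta M k r - real 1 * (24 * r^3 * k^2 + 12 * r - 6 * M) * Delta M k r - real 0 * (24 * r^3 * k^2 + 12 * r - 6 * M) * (2*r + 4*k^2*r^3 - 2*M) * r) / (r ^ (1 + 1) * Delta M k r ^ (0 + 1))),
    [1,1]),
   ((\<lambda>r. (- (4 * r^5) + 12 * r^4 * M) / (r ^ 0 * Delta M k r ^ 2)),
    (\<lambda>r. ((- (20 * r^4) + 48 * r^3 * M) * r * Delta M k r - real 0 * (- (4 * r^5) + 12 * r^4 * M) * Delta M k r - real 2 * (- (4 * r^5) + 12 * r^4 * M) * (2*r + 4*k^2*r^3 - 2*M) * r) / (r ^ (0 + 1) * Delta M k r ^ (2 + 1))),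
    [0,0,1]),
   ((\<lambda>r. (4 * r^3 - 12 * r^2 * M) / (r ^ 0 * Delta M k r ^ 1)),
    (\<lambda>r. ((12 * r^2 - 24 * r * M) * r * Delta M k r - real 0 * (4 * r^3 - 12 * r^2 * M) * Delta M k r - real 1 * (4 * r^3 - 12 * r^2 * M) * (2*r + 4*k^2*r^3 - 2*M) * r) / (r ^ (0 + 1) * Delta M k r ^ (1 + 1))),
    [0,1,1]),
   ((\<lambda>r. (10 * r^3 * k^2 + 8 * r - 14 * M) / (r ^ 0 * Delta M k r ^ 0)),
    (\<lambda>r. ((30 * r^2 * k^2 + 8) * r * Delta M k r - real 0 * (10 * r^3 * k^2 + 8 * r - 14 * M) * Delta M k r - real 0 * (10 * r^3 * k^2 + 8 * r - 14 * M) * (2*r + 4*k^2*r^3 - 2*M) * r) / (r ^ (0 + 1) * Delta M k r ^ (0 + 1))),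
    [1,1,1]),
   ((\<lambda>r. (- (r^4)) / (r ^ 0 * Delta M k r ^ 1)),
    (\<lambda>r. ((- (4 * r^3)) * r * Delta M k r - real 0 * (- (r^4)) * Delta M k r - real 1 * (- (r^4)) * (2*r + 4*k^2*r^3 - 2*M) * r) / (r ^ (0 + 1) * Delta M k r ^ (1 + 1))),
    [0,0,1,1]),
   ((\<lambda>r. (r^4 * k^2 + r^2 - 2 * r * M) / (r ^ 0 * Delta M k r ^ 0)),
    (\<lambda>r. ((4 * r^3 * k^2 + 2 * r - 2 * M) * r * Delta M k r - real 0 * (r^4 * k^2 + r^2 - 2 * r * M) * Delta M k r - real 0 * (r^4 * k^2 + r^2 - 2 * r * M) * (2*r + 4*k^2*r^3 - 2*M) * r) / (r ^ (0 + 1) * Delta M k r ^ (0 + 1))),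
    [1,1,1,1])]"

definition RHP :: "real \<Rightarrow> real \<Rightarrow> coefs" where
  "RHP M k = [((\<lambda>r. (12 * r^8 * M * k^4 + 24 * r^7 * k^2 - 192 * r^6 * M * k^2 + 384 * r^5 * M^2 * k^2 - 24 * r^5 + 180 * r^4 * M - 480 * r^3 * M^2 + 480 * r^2 * M^3) / (r ^ 0 * Delta M k r ^ 2)),
    (\<lambda>r. ((96 * r^7 * M * k^4 + 168 * r^6 * k^2 - 1152 * r^5 * M * k^2 + 1920 * r^4 * M^2 * k^2 - 120 * r^4 + 720 * r^3 * M - 1440 * r^2 * M^2 + 960 * r * M^3) * r * Delta M k r - real 0 * (12 * r^8 * M * k^4 + 24 * r^7 * k^2 - 192 * r^6 * M * k^2 + 384 * r^5 * M^2 * k^2 - 24 * r^5 + 180 * r^4 * M - 480 * r^3 * M^2 + 480 * r^2 * M^3) * Delta M k r - real 2 * (12 * r^8 * M * k^4 + 24 * r^7 * k^2 - 192 * r^6 * M * k^2 + 384 * r^5 * M^2 * k^2 - 24 * r^5 + 180 * r^4 * M - 480 * r^3 * M^2 + 480 * r^2 * M^3) * (2*r + 4*k^2*r^3 - 2*M) * r) / (r ^ (0 + 1) * Delta M k r ^ (2 + 1))),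
    [0]),
   ((\<lambda>r. (24 * r^6 * k^4 + 48 * r^4 * k^2 - 96 * r^3 * M * k^2 + 24 * r^2 - 96 * r * M + 96 * M^2) / (r ^ 1 * Delta M k r ^ 0)),
    (\<lambda>r. ((144 * r^5 * k^4 + 192 * r^3 * k^2 - 288 * r^2 * M * k^2 + 48 * r - 96 * M) * r * Delta M k r - real 1 * (24 * r^6 * k^4 + 48 * r^4 * k^2 - 96 * r^3 * M * k^2 + 24 * r^2 - 96 * r * M + 96 * M^2) * Delta M k r - real 0 * (24 * r^6 * k^4 + 48 * r^4 * k^2 - 96 * r^3 * M * k^2 + 24 * r^2 - 96 * r * M + 96 * M^2) * (2*r + 4*k^2*r^3 - 2*M) * r) / (r ^ (1 + 1) * Delta M k r ^ (0 + 1))),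
    [1]),
   ((\<lambda>r. (4 * r^6 - 24 * r^5 * M + 36 * r^4 * M^2) / (r ^ 0 * Delta M k r ^ 2)),
    (\<lambda>r. ((24 * r^5 - 120 * r^4 * M + 144 * r^3 * M^2) * r * Delta M k r - real 0 * (4 * r^6 - 24 * r^5 * M + 36 * r^4 * M^2) * Delta M k r - real 2 * (4 * r^6 - 24 * r^5 * M + 36 * r^4 * M^2) * (2*r + 4*k^2*r^3 - 2*M) * r) / (r ^ (0 + 1) * Delta M k r ^ (2 + 1))),
    [0,0]),
   ((\<lambda>r. (- (8 * r^6 * k^2) - 40 * r^4 + 208 * r^3 * M - 288 * r^2 * M^2) / (r ^ 0 * Delta M k r ^ 1)),
    (\<lambda>r. ((- (48 * r^5 * k^2) - 160 * r^3 + 624 * r^2 * M - 576 * r * M^2) * r * Delta M k r - real 0 * (- (8 * r^6 * k^2) - 40 * r^4 + 208 * r^3 * M - 288 * r^2 * M^2) * Delta M k r - real 1 * (- (8 * r^6 * k^2) - 40 * r^4 + 208 * r^3 * M - 288 * r^2 * M^2) * (2*r + 4*k^2*r^3 - 2*M) * r) / (r ^ (0 + 1) * Delta M k r ^ (1 + 1))),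
    [0,1]),
   ((\<lambda>r. (36 * r^6 * k^4 + 72 * r^4 * k^2 - 144 * r^3 * M * k^2 + 36 * r^2 - 144 * r * M + 144 * M^2) / (r ^ 0 * Delta M k r ^ 0)),
    (\<lambda>r. ((216 * r^5 * k^4 + 288 * r^3 * k^2 - 432 * r^2 * M * k^2 + 72 * r - 144 * M) * r * Delta M k r - real 0 * (36 * r^6 * k^4 + 72 * r^4 * k^2 - 144 * r^3 * M * k^2 + 36 * r^2 - 144 * r * M + 144 * M^2) * Delta M k r - real 0 * (36 * r^6 * k^4 + 72 * r^4 * k^2 - 144 * r^3 * M * k^2 + 36 * r^2 - 144 * r * M + 144 * M^2) * (2*r + 4*k^2*r^3 - 2*M) * r) / (r ^ (0 + 1) * Delta M k r ^ (0 + 1))),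
    [1,1]),
   ((\<lambda>r. (8 * r^7 - 24 * r^6 * M) / (r ^ 0 * Delta M k r ^ 2)),
    (\<lambda>r. ((56 * r^6 - 144 * r^5 * M) * r * Delta M k r - real 0 * (8 * r^7 - 24 * r^6 * M) * Delta M k r - real 2 * (8 * r^7 - 24 * r^6 * M) * (2*r + 4*k^2*r^3 - 2*M) * r) / (r ^ (0 + 1) * Delta M k r ^ (2 + 1))),
    [0,0,0]),
   ((\<lambda>r. (- (4 * r^7 * k^2) - 12 * r^5 + 32 * r^4 * M) / (r ^ 0 * Delta M k r ^ 1)),
    (\<lambda>r. ((- (28 * r^6 * k^2) - 60 * r^4 + 128 * r^3 * M) * r * Delta M k r - real 0 * (- (4 * r^7 * k^2) - 12 * r^5 + 32 * r^4 * M) * Delta M k r - real 1 * (- (4 * r^7 * k^2) - 12 * r^5 + 32 * r^4 * M) * (2*r + 4*k^2*r^3 - 2*M) * r) / (r ^ (0 + 1) * Delta M k r ^ (1 + 1))),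
    [0,0,1]),
   ((\<lambda>r. (- (8 * r^3) + 24 * r^2 * M) / (r ^ 0 * Delta M k r ^ 0)),
    (\<lambda>r. ((- (24 * r^2) + 48 * r * M) * r * Delta M k r - real 0 * (- (8 * r^3) + 24 * r^2 * M) * Delta M k r - real 0 * (- (8 * r^3) + 24 * r^2 * M) * (2*r + 4*k^2*r^3 - 2*M) * r) / (r ^ (0 + 1) * Delta M k r ^ (0 + 1))),
    [0,1,1]),
   ((\<lambda>r. (12 * r^7 * k^4 + 24 * r^5 * k^2 - 48 * r^4 * M * k^2 + 12 * r^3 - 48 * r^2 * M + 48 * r * M^2) / (r ^ 0 * Delta M k r ^ 0)),
    (\<lambda>r. ((84 * r^6 * k^4 + 120 * r^4 * k^2 - 192 * r^3 * M * k^2 + 36 * r^2 - 96 * r * M + 48 * M^2) * r * Delta M k r - real 0 * (12 * r^7 * k^4 + 24 * r^5 * k^2 - 48 * r^4 * M * k^2 + 12 * r^3 - 48 * r^2 * M + 48 * r * M^2) * Delta M k r - real 0 * (12 * r^7 * k^4 + 24 * r^5 * k^2 - 48 * r^4 * M * k^2 + 12 * r^3 - 48 * r^2 * M + 48 * r * M^2) * (2*r + 4*k^2*r^3 - 2*M) * r) / (r ^ (0 + 1) * Delta M k r ^ (0 + 1))),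
    [1,1,1]),
   ((\<lambda>r. (r^8) / (r ^ 0 * Delta M k r ^ 2)),
    (\<lambda>r. ((8 * r^7) * r * Delta M k r - real 0 * (r^8) * Delta M k r - real 2 * (r^8) * (2*r + 4*k^2*r^3 - 2*M) * r) / (r ^ (0 + 1) * Delta M k r ^ (2 + 1))),
    [0,0,0,0]),
   ((\<lambda>r. (- (2 * r^4)) / (r ^ 0 * Delta M k r ^ 0)),
    (\<lambda>r. ((- (8 * r^3)) * r * Delta M k r - real 0 * (- (2 * r^4)) * Delta M k r - real 0 * (- (2 * r^4)) * (2*r + 4*k^2*r^3 - 2*M) * r) / (r ^ (0 + 1) * Delta M k r ^ (0 + 1))),
    [0,0,1,1]),
   ((\<lambda>r. (r^8 * k^4 + 2 * r^6 * k^2 - 4 * r^5 * M * k^2 + r^4 - 4 * r^3 * M + 4 * r^2 * M^2) / (r ^ 0 * Delta M k r ^ 0)),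
    (\<lambda>r. ((8 * r^7 * k^4 + 12 * r^5 * k^2 - 20 * r^4 * M * k^2 + 4 * r^3 - 12 * r^2 * M + 8 * r * M^2) * r * Delta M k r - real 0 * (r^8 * k^4 + 2 * r^6 * k^2 - 4 * r^5 * M * k^2 + r^4 - 4 * r^3 * M + 4 * r^2 * M^2) * Delta M k r - real 0 * (r^8 * k^4 + 2 * r^6 * k^2 - 4 * r^5 * M * k^2 + r^4 - 4 * r^3 * M + 4 * r^2 * M^2) * (2*r + 4*k^2*r^3 - 2*M) * r) / (r ^ (0 + 1) * Delta M k r ^ (0 + 1))),
    [1,1,1,1])]"

definition RHM :: "real \<Rightarrow> real \<Rightarrow> coefs" where
  "RHM M k = [((\<lambda>r. (- (12 * r^8 * M * k^4) - 24 * r^7 * k^2 + 192 * r^6 * M * k^2 - 384 * r^5 * M^2 * k^2 + 24 * r^5 - 180 * r^4 * M + 480 * r^3 * M^2 - 480 * r^2 * M^3) / (r ^ 0 * Delta M k r ^ 2)),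
    (\<lambda>r. ((- (96 * r^7 * M * k^4) - 168 * r^6 * k^2 + 1152 * r^5 * M * k^2 - 1920 * r^4 * M^2 * k^2 + 120 * r^4 - 720 * r^3 * M + 1440 * r^2 * M^2 - 960 * r * M^3) * r * Delta M k r - real 0 * (- (12 * r^8 * M * k^4) - 24 * r^7 * k^2 + 192 * r^6 * M * k^2 - 384 * r^5 * M^2 * k^2 + 24 * r^5 - 180 * r^4 * M + 480 * r^3 * M^2 - 480 * r^2 * M^3) * Delta M k r - real 2 * (- (12 * r^8 * M * k^4) - 24 * r^7 * k^2 + 192 * r^6 * M * k^2 - 384 * r^5 * M^2 * k^2 + 24 * r^5 - 180 * r^4 * M + 480 * r^3 * M^2 - 480 * r^2 * M^3) * (2*r + 4*k^2*r^3 - 2*M) * r) / (r ^ (0 + 1) * Delta M k r ^ (2 + 1))),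
    [0]),
   ((\<lambda>r. (24 * r^6 * k^4 + 48 * r^4 * k^2 - 96 * r^3 * M * k^2 + 24 * r^2 - 96 * r * M + 96 * M^2) / (r ^ 1 * Delta M k r ^ 0)),
    (\<lambda>r. ((144 * r^5 * k^4 + 192 * r^3 * k^2 - 288 * r^2 * M * k^2 + 48 * r - 96 * M) * r * Delta M k r - real 1 * (24 * r^6 * k^4 + 48 * r^4 * k^2 - 96 * r^3 * M * k^2 + 24 * r^2 - 96 * r * M + 96 * M^2) * Delta M k r - real 0 * (24 * r^6 * k^4 + 48 * r^4 * k^2 - 96 * r^3 * M * k^2 + 24 * r^2 - 96 * r * M + 96 * M^2) * (2*r + 4*k^2*r^3 - 2*M) * r) / (r ^ (1 + 1) * Delta M k r ^ (0 + 1))),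
    [1]),
   ((\<lambda>r. (4 * r^6 - 24 * r^5 * M + 36 * r^4 * M^2) / (r ^ 0 * Delta M k r ^ 2)),
    (\<lambda>r. ((24 * r^5 - 120 * r^4 * M + 144 * r^3 * M^2) * r * Delta M k r - real 0 * (4 * r^6 - 24 * r^5 * M + 36 * r^4 * M^2) * Delta M k r - real 2 * (4 * r^6 - 24 * r^5 * M + 36 * r^4 * M^2) * (2*r + 4*k^2*r^3 - 2*M) * r) / (r ^ (0 + 1) * Delta M k r ^ (2 + 1))),
    [0,0]),
   ((\<lambda>r. (8 * r^6 * k^2 + 40 * r^4 - 208 * r^3 * M + 288 * r^2 * M^2) / (r ^ 0 * Delta M k r ^ 1)),
    (\<lambda>r. ((48 * r^5 * k^2 + 160 * r^3 - 624 * r^2 * M + 576 * r * M^2) * r * Delta M k r - real 0 * (8 * r^6 * k^2 + 40 * r^4 - 208 * r^3 * M + 288 * r^2 * M^2) * Delta M k r - real 1 * (8 * r^6 * k^2 + 40 * r^4 - 208 * r^3 * M + 288 * r^2 * M^2) * (2*r + 4*k^2*r^3 - 2*M) * r) / (r ^ (0 + 1) * Delta M k r ^ (1 + 1))),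
    [0,1]),
   ((\<lambda>r. (36 * r^6 * k^4 + 72 * r^4 * k^2 - 144 * r^3 * M * k^2 + 36 * r^2 - 144 * r * M + 144 * M^2) / (r ^ 0 * Delta M k r ^ 0)),
    (\<lambda>r. ((216 * r^5 * k^4 + 288 * r^3 * k^2 - 432 * r^2 * M * k^2 + 72 * r - 144 * M) * r * Delta M k r - real 0 * (36 * r^6 * k^4 + 72 * r^4 * k^2 - 144 * r^3 * M * k^2 + 36 * r^2 - 144 * r * M + 144 * M^2) * Delta M k r - real 0 * (36 * r^6 * k^4 + 72 * r^4 * k^2 - 144 * r^3 * M * k^2 + 36 * r^2 - 144 * r * M + 144 * M^2) * (2*r + 4*k^2*r^3 - 2*M) * r) / (r ^ (0 + 1) * Delta M k r ^ (0 + 1))),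
    [1,1]),
   ((\<lambda>r. (- (8 * r^7) + 24 * r^6 * M) / (r ^ 0 * Delta M k r ^ 2)),
    (\<lambda>r. ((- (56 * r^6) + 144 * r^5 * M) * r * Delta M k r - real 0 * (- (8 * r^7) + 24 * r^6 * M) * Delta M k r - real 2 * (- (8 * r^7) + 24 * r^6 * M) * (2*r + 4*k^2*r^3 - 2*M) * r) / (r ^ (0 + 1) * Delta M k r ^ (2 + 1))),
    [0,0,0]),
   ((\<lambda>r. (- (4 * r^7 * k^2) - 12 * r^5 + 32 * r^4 * M) / (r ^ 0 * Delta M k r ^ 1)),
    (\<lambda>r. ((- (28 * r^6 * k^2) - 60 * r^4 + 128 * r^3 * M) * r * Delta M k r - real 0 * (- (4 * r^7 * k^2) - 12 * r^5 + 32 * r^4 * M) * Delta M k r - real 1 * (- (4 * r^7 * k^2) - 12 * r^5 + 32 * r^4 * M) * (2*r + 4*k^2*r^3 - 2*M) * r) / (r ^ (0 + 1) * Delta M k r ^ (1 + 1))),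
    [0,0,1]),
   ((\<lambda>r. (8 * r^3 - 24 * r^2 * M) / (r ^ 0 * Delta M k r ^ 0)),
    (\<lambda>r. ((24 * r^2 - 48 * r * M) * r * Delta M k r - real 0 * (8 * r^3 - 24 * r^2 * M) * Delta M k r - real 0 * (8 * r^3 - 24 * r^2 * M) * (2*r + 4*k^2*r^3 - 2*M) * r) / (r ^ (0 + 1) * Delta M k r ^ (0 + 1))),
    [0,1,1]),
   ((\<lambda>r. (12 * r^7 * k^4 + 24 * r^5 * k^2 - 48 * r^4 * M * k^2 + 12 * r^3 - 48 * r^2 * M + 48 * r * M^2) / (r ^ 0 * Delta M k r ^ 0)),
    (\<lambda>r. ((84 * r^6 * k^4 + 120 * r^4 * k^2 - 192 * r^3 * M * k^2 + 36 * r^2 - 96 * r * M + 48 * M^2) * r * Delta M k r - real 0 * (12 * r^7 * k^4 + 24 * r^5 * k^2 - 48 * r^4 * M * k^2 + 12 * r^3 - 48 * r^2 * M + 48 * r * M^2) * Delta M k r - real 0 * (12 * r^7 * k^4 + 24 * r^5 * k^2 - 48 * r^4 * M * k^2 + 12 * r^3 - 48 * r^2 * M + 48 * r * M^2) * (2*r + 4*k^2*r^3 - 2*M) * r) / (r ^ (0 + 1) * Delta M k r ^ (0 + 1))),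
    [1,1,1]),
   ((\<lambda>r. (r^8) / (r ^ 0 * Delta M k r ^ 2)),
    (\<lambda>r. ((8 * r^7) * r * Delta M k r - real 0 * (r^8) * Delta M k r - real 2 * (r^8) * (2*r + 4*k^2*r^3 - 2*M) * r) / (r ^ (0 + 1) * Delta M k r ^ (2 + 1))),
    [0,0,0,0]),
   ((\<lambda>r. (- (2 * r^4)) / (r ^ 0 * Delta M k r ^ 0)),
    (\<lambda>r. ((- (8 * r^3)) * r * Delta M k r - real 0 * (- (2 * r^4)) * Delta M k r - real 0 * (- (2 * r^4)) * (2*r + 4*k^2*r^3 - 2*M) * r) / (r ^ (0 + 1) * Delta M k r ^ (0 + 1))),
    [0,0,1,1]),
   ((\<lambda>r. (r^8 * k^4 + 2 * r^6 * k^2 - 4 * r^5 * M * k^2 + r^4 - 4 * r^3 * M + 4 * r^2 * M^2) / (r ^ 0 * Delta M k r ^ 0)),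
    (\<lambda>r. ((8 * r^7 * k^4 + 12 * r^5 * k^2 - 20 * r^4 * M * k^2 + 4 * r^3 - 12 * r^2 * M + 8 * r * M^2) * r * Delta M k r - real 0 * (r^8 * k^4 + 2 * r^6 * k^2 - 4 * r^5 * M * k^2 + r^4 - 4 * r^3 * M + 4 * r^2 * M^2) * Delta M k r - real 0 * (r^8 * k^4 + 2 * r^6 * k^2 - 4 * r^5 * M * k^2 + r^4 - 4 * r^3 * M + 4 * r^2 * M^2) * (2*r + 4*k^2*r^3 - 2*M) * r) / (r ^ (0 + 1) * Delta M k r ^ (0 + 1))),
    [1,1,1,1])]"

lemma dok_LB:
  assumes r: "0 < r" and D: "0 < Delta M k r"
  shows "dok (LB M k) r"
  unfolding LB_def dok_simps
  apply (intro conjI TrueI dok_simps(1))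
  subgoal apply (rule DERIV_rat[where N'="0", OF _ r D])
    subgoal by (auto intro!: derivative_eq_intros; algebra?)
    subgoal by simp
    done
  subgoal apply (rule DERIV_rat[where N'="(- (3 * r^2 * k^2) - 1)", OF _ r D])
    subgoal by (auto intro!: derivative_eq_intros; algebra?)
    subgoal by simp
    done
  done

lemma dok_B1:
  assumes r: "0 < r" and D: "0 < Delta M k r"
  shows "dok (B1 M k) r"
  unfolding B1_def dok_simps
  apply (intro conjI TrueI dok_simps(1))
  subgoal apply (rule DERIV_rat[where N'="(4 * r^3)", OF _ r D])
    subgoal by (auto intro!: derivative_eq_intros; algebra?)
    subgoal by simp
    done
  subgoal apply (rule DERIV_rat[where N'="(- (2 * r))", OF _ r D])
    subgoal by (auto intro!: derivative_eq_intros; algebra?)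
    subgoal by simp
    done
  done

lemma dok_B2:
  assumes r: "0 < r" and D: "0 < Delta M k r"
  shows "dok (B2 M k) r"
  unfolding B2_def dok_simps
  apply (intro conjI TrueI dok_simps(1))
  subgoal apply (rule DERIV_rat[where N'="(- (14 * r^6) + 36 * r^5 * M)", OF _ r D])
    subgoal by (auto intro!: derivative_eq_intros; algebra?)
    subgoal by simp
    done
  subgoal apply (rule DERIV_rat[where N'="(6 * r^2)", OF _ r D])
    subgoal by (auto intro!: derivative_eq_intros; algebra?)
    subgoal by simp
    done
  subgoal apply (rule DERIV_rat[where N'="(8 * r^7)", OF _ r D])
    subgoal by (auto intro!: derivative_eq_intros; algebra?)
    subgoal by simp
    done
  subgoal apply (rule DERIV_rat[where N'="(- (12 * r^5))", OF _ r D])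
    subgoal by (auto intro!: derivative_eq_intros; algebra?)
    subgoal by simp
    done
  subgoal apply (rule DERIV_rat[where N'="(4 * r^3)", OF _ r D])
    subgoal by (auto intro!: derivative_eq_intros; algebra?)
    subgoal by simp
    done
  done

lemma dok_B3:
  assumes r: "0 < r" and D: "0 < Delta M k r"
  shows "dok (B3 M k) r"
  unfolding B3_def dok_simps
  apply (intro conjI TrueI dok_simps(1))
  subgoal apply (rule DERIV_rat[where N'="(24 * r^11 * k^2 - 132 * r^10 * M * k^2 - 60 * r^9 + 288 * r^8 * M - 384 * r^7 * M^2)", OF _ r D])
    subgoal by (auto intro!: derivative_eq_intros; algebra?)
    subgoal by simp
    done
  subgoal apply (rule DERIV_rat[where N'="(24 * r^3)", OF _ r D])
    subgoal by (auto intro!: derivative_eq_intros; algebra?)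
    subgoal by simp
    done
  subgoal apply (rule DERIV_rat[where N'="(22 * r^10 - 60 * r^9 * M)", OF _ r D])
    subgoal by (auto intro!: derivative_eq_intros; algebra?)
    subgoal by simp
    done
  subgoal apply (rule DERIV_rat[where N'="(- (22 * r^10 * k^2) - 72 * r^8 + 176 * r^7 * M)", OF _ r D])
    subgoal by (auto intro!: derivative_eq_intros; algebra?)
    subgoal by simp
    done
  subgoal apply (rule DERIV_rat[where N'="(30 * r^4)", OF _ r D])
    subgoal by (auto intro!: derivative_eq_intros; algebra?)
    subgoal by simp
    done
  subgoal apply (rule DERIV_rat[where N'="(12 * r^11)", OF _ r D])
    subgoal by (auto intro!: derivative_eq_intros; algebra?)
    subgoal by simp
    done
  subgoal apply (rule DERIV_rat[where N'="(- (10 * r^9))", OF _ r D])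
    subgoal by (auto intro!: derivative_eq_intros; algebra?)
    subgoal by simp
    done
  subgoal apply (rule DERIV_rat[where N'="(- (8 * r^7))", OF _ r D])
    subgoal by (auto intro!: derivative_eq_intros; algebra?)
    subgoal by simp
    done
  subgoal apply (rule DERIV_rat[where N'="(6 * r^5)", OF _ r D])
    subgoal by (auto intro!: derivative_eq_intros; algebra?)
    subgoal by simp
    done
  done

lemma dok_C1:
  assumes r: "0 < r" and D: "0 < Delta M k r"
  shows "dok (C1 M k) r"
  unfolding C1_def dok_simps
  apply (intro conjI TrueI dok_simps(1))
  subgoal apply (rule DERIV_rat[where N'="(4 * r^3)", OF _ r D])
    subgoal by (auto intro!: derivative_eq_intros; algebra?)
    subgoal by simp
    done
  subgoal apply (rule DERIV_rat[where N'="(2 * r)", OF _ r D])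
    subgoal by (auto intro!: derivative_eq_intros; algebra?)
    subgoal by simp
    done
  done

lemma dok_C2:
  assumes r: "0 < r" and D: "0 < Delta M k r"
  shows "dok (C2 M k) r"
  unfolding C2_def dok_simps
  apply (intro conjI TrueI dok_simps(1))
  subgoal apply (rule DERIV_rat[where N'="(14 * r^6 - 36 * r^5 * M)", OF _ r D])
    subgoal by (auto intro!: derivative_eq_intros; algebra?)
    subgoal by simp
    done
  subgoal apply (rule DERIV_rat[where N'="(6 * r^2)", OF _ r D])
    subgoal by (auto intro!: derivative_eq_intros; algebra?)
    subgoal by simp
    done
  subgoal apply (rule DERIV_rat[where N'="(8 * r^7)", OF _ r D])
    subgoal by (auto intro!: derivative_eq_intros; algebra?)
    subgoal by simp
    done
  subgoal apply (rule DERIV_rat[where N'="(12 * r^5)", OF _ r D])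
    subgoal by (auto intro!: derivative_eq_intros; algebra?)
    subgoal by simp
    done
  subgoal apply (rule DERIV_rat[where N'="(4 * r^3)", OF _ r D])
    subgoal by (auto intro!: derivative_eq_intros; algebra?)
    subgoal by simp
    done
  done

lemma dok_C3:
  assumes r: "0 < r" and D: "0 < Delta M k r"
  shows "dok (C3 M k) r"
  unfolding C3_def dok_simps
  apply (intro conjI TrueI dok_simps(1))
  subgoal apply (rule DERIV_rat[where N'="(24 * r^11 * k^2 - 132 * r^10 * M * k^2 - 60 * r^9 + 288 * r^8 * M - 384 * r^7 * M^2)", OF _ r D])
    subgoal by (auto intro!: derivative_eq_intros; algebra?)
    subgoal by simp
    done
  subgoal apply (rule DERIV_rat[where N'="(- (24 * r^3))", OF _ r D])
    subgoal by (auto intro!: derivative_eq_intros; algebra?)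
    subgoal by simp
    done
  subgoal apply (rule DERIV_rat[where N'="(- (22 * r^10) + 60 * r^9 * M)", OF _ r D])
    subgoal by (auto intro!: derivative_eq_intros; algebra?)
    subgoal by simp
    done
  subgoal apply (rule DERIV_rat[where N'="(- (22 * r^10 * k^2) - 72 * r^8 + 176 * r^7 * M)", OF _ r D])
    subgoal by (auto intro!: derivative_eq_intros; algebra?)
    subgoal by simp
    done
  subgoal apply (rule DERIV_rat[where N'="(- (30 * r^4))", OF _ r D])
    subgoal by (auto intro!: derivative_eq_intros; algebra?)
    subgoal by simp
    done
  subgoal apply (rule DERIV_rat[where N'="(12 * r^11)", OF _ r D])
    subgoal by (auto intro!: derivative_eq_intros; algebra?)
    subgoal by simp
    done
  subgoal apply (rule DERIV_rat[where N'="(10 * r^9)", OF _ r D])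
    subgoal by (auto intro!: derivative_eq_intros; algebra?)
    subgoal by simp
    done
  subgoal apply (rule DERIV_rat[where N'="(- (8 * r^7))", OF _ r D])
    subgoal by (auto intro!: derivative_eq_intros; algebra?)
    subgoal by simp
    done
  subgoal apply (rule DERIV_rat[where N'="(- (6 * r^5))", OF _ r D])
    subgoal by (auto intro!: derivative_eq_intros; algebra?)
    subgoal by simp
    done
  done

lemma dok_Rl:
  assumes r: "0 < r" and D: "0 < Delta M k r"
  shows "dok (Rl M k) r"
  unfolding Rl_def dok_simps
  apply (intro conjI TrueI dok_simps(1))
  subgoal apply (rule DERIV_rat[where N'="(2)", OF _ r D])
    subgoal by (auto intro!: derivative_eq_intros; algebra?)
    subgoal by simp
    done
  subgoal apply (rule DERIV_rat[where N'="(- (12 * r^2) + 24 * r * M)", OF _ r D])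
    subgoal by (auto intro!: derivative_eq_intros; algebra?)
    subgoal by simp
    done
  subgoal apply (rule DERIV_rat[where N'="(6 * r^2 * k^2 + 4)", OF _ r D])
    subgoal by (auto intro!: derivative_eq_intros; algebra?)
    subgoal by simp
    done
  subgoal apply (rule DERIV_rat[where N'="(- (4 * r^3))", OF _ r D])
    subgoal by (auto intro!: derivative_eq_intros; algebra?)
    subgoal by simp
    done
  subgoal apply (rule DERIV_rat[where N'="(4 * r^3 * k^2 + 2 * r - 2 * M)", OF _ r D])
    subgoal by (auto intro!: derivative_eq_intros; algebra?)
    subgoal by simp
    done
  done

lemma dok_Rm:
  assumes r: "0 < r" and D: "0 < Delta M k r"
  shows "dok (Rm M k) r"
  unfolding Rm_def dok_simps
  apply (intro conjI TrueI dok_simps(1))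
  subgoal apply (rule DERIV_rat[where N'="(2)", OF _ r D])
    subgoal by (auto intro!: derivative_eq_intros; algebra?)
    subgoal by simp
    done
  subgoal apply (rule DERIV_rat[where N'="(12 * r^2 - 24 * r * M)", OF _ r D])
    subgoal by (auto intro!: derivative_eq_intros; algebra?)
    subgoal by simp
    done
  subgoal apply (rule DERIV_rat[where N'="(6 * r^2 * k^2 + 4)", OF _ r D])
    subgoal by (auto intro!: derivative_eq_intros; algebra?)
    subgoal by simp
    done
  subgoal apply (rule DERIV_rat[where N'="(- (4 * r^3))", OF _ r D])
    subgoal by (auto intro!: derivative_eq_intros; algebra?)
    subgoal by simp
    done
  subgoal apply (rule DERIV_rat[where N'="(4 * r^3 * k^2 + 2 * r - 2 * M)", OF _ r D])
    subgoal by (auto intro!: derivative_eq_intros; algebra?)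
    subgoal by simp
    done
  done

lemma dok_P1:
  assumes r: "0 < r" and D: "0 < Delta M k r"
  shows "dok (P1 M k) r"
  unfolding P1_def dok_simps
  apply (intro conjI TrueI dok_simps(1))
  subgoal apply (rule DERIV_rat[where N'="0", OF _ r D])
    subgoal by (auto intro!: derivative_eq_intros; algebra?)
    subgoal by simp
    done
  subgoal apply (rule DERIV_rat[where N'="(24 * r^5 * k^2 - 120 * r^4 * M * k^2 - 16 * r^3 + 48 * r^2 * M - 48 * r * M^2)", OF _ r D])
    subgoal by (auto intro!: derivative_eq_intros; algebra?)
    subgoal by simp
    done
  subgoal apply (rule DERIV_rat[where N'="(18 * r^2 * k^2 + 6)", OF _ r D])
    subgoal by (auto intro!: derivative_eq_intros; algebra?)
    subgoal by simp
    done
  subgoal apply (rule DERIV_rat[where N'="(- (10 * r^4) + 24 * r^3 * M)", OF _ r D])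
    subgoal by (auto intro!: derivative_eq_intros; algebra?)
    subgoal by simp
    done
  subgoal apply (rule DERIV_rat[where N'="(- (12 * r^2) + 24 * r * M)", OF _ r D])
    subgoal by (auto intro!: derivative_eq_intros; algebra?)
    subgoal by simp
    done
  subgoal apply (rule DERIV_rat[where N'="(18 * r^2 * k^2 + 6)", OF _ r D])
    subgoal by (auto intro!: derivative_eq_intros; algebra?)
    subgoal by simp
    done
  subgoal apply (rule DERIV_rat[where N'="(- (4 * r^3))", OF _ r D])
    subgoal by (auto intro!: derivative_eq_intros; algebra?)
    subgoal by simp
    done
  subgoal apply (rule DERIV_rat[where N'="(4 * r^3 * k^2 + 2 * r - 2 * M)", OF _ r D])
    subgoal by (auto intro!: derivative_eq_intros; algebra?)
    subgoal by simp
    done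
  done

lemma dok_Q1:
  assumes r: "0 < r" and D: "0 < Delta M k r"
  shows "dok (Q1 M k) r"
  unfolding Q1_def dok_simps
  apply (intro conjI TrueI dok_simps(1))
  subgoal apply (rule DERIV_rat[where N'="0", OF _ r D])
    subgoal by (auto intro!: derivative_eq_intros; algebra?)
    subgoal by simp
    done
  subgoal apply (rule DERIV_rat[where N'="(- (24 * r^5 * k^2) + 120 * r^4 * M * k^2 + 16 * r^3 - 48 * r^2 * M + 48 * r * M^2)", OF _ r D])
    subgoal by (auto intro!: derivative_eq_intros; algebra?)
    subgoal by simp
    done
  subgoal apply (rule DERIV_rat[where N'="(18 * r^2 * k^2 + 6)", OF _ r D])
    subgoal by (auto intro!: derivative_eq_intros; algebra?)
    subgoal by simp
    done
  subgoal apply (rule DERIV_rat[where N'="(- (10 * r^4) + 24 * r^3 * M)", OF _ r D])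
    subgoal by (auto intro!: derivative_eq_intros; algebra?)
    subgoal by simp
    done
  subgoal apply (rule DERIV_rat[where N'="(12 * r^2 - 24 * r * M)", OF _ r D])
    subgoal by (auto intro!: derivative_eq_intros; algebra?)
    subgoal by simp
    done
  subgoal apply (rule DERIV_rat[where N'="(18 * r^2 * k^2 + 6)", OF _ r D])
    subgoal by (auto intro!: derivative_eq_intros; algebra?)
    subgoal by simp
    done
  subgoal apply (rule DERIV_rat[where N'="(- (4 * r^3))", OF _ r D])
    subgoal by (auto intro!: derivative_eq_intros; algebra?)
    subgoal by simp
    done
  subgoal apply (rule DERIV_rat[where N'="(4 * r^3 * k^2 + 2 * r - 2 * M)", OF _ r D])
    subgoal by (auto intro!: derivative_eq_intros; algebra?)
    subgoal by simp
    done
  done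

lemma nLB:
  assumes q: "q \<in> exterior M k" and u: "smooth_on_pt (exterior M k) u"
  shows "sumt u (scl (\<lambda>r. 1) (dd 0 (A0)) @ scl (\<lambda>r. - (Delta M k r / r^2)) (d1 (A0))) q = sumt u (LB M k) q"
proof -
  obtain t r th ph where qq: "q = (t, r, th, ph)" by (cases q) auto
  have r: "0 < r" and D: "0 < Delta M k r" using q by (auto simp: qq exterior_def)
  show ?thesis
    apply (rule sumt_norm[OF open_exterior u q])
    using r D by (simp add: qq LB_def A0_def wf_def wprime_eq[OF r] field_simps; (unfold Delta_def)?; (intro conjI)?; algebra)
qed

lemma nLP:
  assumes q: "q \<in> exterior M k" and u: "smooth_on_pt (exterior M k) u"
  shows "sumt u (scl (\<lambda>r. 1) (dd 0 (A0)) @ scl (\<lambda>r. Delta M k r / r^2) (d1 (A0))) q = sumt u (LP M k) q"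
proof -
  obtain t r th ph where qq: "q = (t, r, th, ph)" by (cases q) auto
  have r: "0 < r" and D: "0 < Delta M k r" using q by (auto simp: qq exterior_def)
  show ?thesis
    apply (rule sumt_norm[OF open_exterior u q])
    using r D by (simp add: qq LP_def A0_def wf_def wprime_eq[OF r] field_simps; (unfold Delta_def)?; (intro conjI)?; algebra)
qed

lemma nB1:
  assumes q: "q \<in> exterior M k" and u: "smooth_on_pt (exterior M k) u"
  shows "sumt u (scl (\<lambda>r. 1 / wf M k r) (dd 0 (A0)) @ scl (\<lambda>r. - (1 / wf M k r * (Delta M k r / r^2))) (d1 (A0))) q = sumt u (B1 M k) q"
proof -
  obtain t r th ph where qq: "q = (t, r, th, ph)" by (cases q) auto
  have r: "0 < r" and D: "0 < Delta M k r" using q by (auto simp: qq exterior_def)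
  show ?thesis
    apply (rule sumt_norm[OF open_exterior u q])
    using r D by (simp add: qq B1_def A0_def wf_def wprime_eq[OF r] field_simps; (unfold Delta_def)?; (intro conjI)?; algebra)
qed

lemma nB2:
  assumes q: "q \<in> exterior M k" and u: "smooth_on_pt (exterior M k) u"
  shows "sumt u (scl (\<lambda>r. 1 / wf M k r) (dd 0 (B1 M k)) @ scl (\<lambda>r. - (1 / wf M k r * (Delta M k r / r^2))) (d1 (B1 M k))) q = sumt u (B2 M k) q"
proof -
  obtain t r th ph where qq: "q = (t, r, th, ph)" by (cases q) auto
  have r: "0 < r" and D: "0 < Delta M k r" using q by (auto simp: qq exterior_def)
  show ?thesis
    apply (rule sumt_norm[OF open_exterior u q])
    using r D by (simp add: qq B1_def B2_def wf_def wprime_eq[OF r] field_simps; (unfold Delta_def)?; (intro conjI)?; algebra)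
qed

lemma nB3:
  assumes q: "q \<in> exterior M k" and u: "smooth_on_pt (exterior M k) u"
  shows "sumt u (scl (\<lambda>r. 1 / wf M k r) (dd 0 (B2 M k)) @ scl (\<lambda>r. 1 / wf M k r * (Delta M k r / r^2)) (d1 (B2 M k))) q = sumt u (B3 M k) q"
proof -
  obtain t r th ph where qq: "q = (t, r, th, ph)" by (cases q) auto
  have r: "0 < r" and D: "0 < Delta M k r" using q by (auto simp: qq exterior_def)
  show ?thesis
    apply (rule sumt_norm[OF open_exterior u q])
    using r D by (simp add: qq B2_def B3_def wf_def wprime_eq[OF r] field_simps; (unfold Delta_def)?; (intro conjI)?; algebra)
qed

lemma nC1:
  assumes q: "q \<in> exterior M k" and u: "smooth_on_pt (exterior M k) u"
  shows "sumt u (scl (\<lambda>r. 1 / wf M k r) (dd 0 (A0)) @ scl (\<lambda>r. 1 / wf M k r * (Delta M k r / r^2)) (d1 (A0))) q = sumt u (C1 M k) q"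
proof -
  obtain t r th ph where qq: "q = (t, r, th, ph)" by (cases q) auto
  have r: "0 < r" and D: "0 < Delta M k r" using q by (auto simp: qq exterior_def)
  show ?thesis
    apply (rule sumt_norm[OF open_exterior u q])
    using r D by (simp add: qq C1_def A0_def wf_def wprime_eq[OF r] field_simps; (unfold Delta_def)?; (intro conjI)?; algebra)
qed

lemma nC2:
  assumes q: "q \<in> exterior M k" and u: "smooth_on_pt (exterior M k) u"
  shows "sumt u (scl (\<lambda>r. 1 / wf M k r) (dd 0 (C1 M k)) @ scl (\<lambda>r. 1 / wf M k r * (Delta M k r / r^2)) (d1 (C1 M k))) q = sumt u (C2 M k) q"
proof -
  obtain t r th ph where qq: "q = (t, r, th, ph)" by (cases q) auto
  have r: "0 < r" and D: "0 < Delta M k r" using q by (auto simp: qq exterior_def)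
  show ?thesis
    apply (rule sumt_norm[OF open_exterior u q])
    using r D by (simp add: qq C1_def C2_def wf_def wprime_eq[OF r] field_simps; (unfold Delta_def)?; (intro conjI)?; algebra)
qed

lemma nC3:
  assumes q: "q \<in> exterior M k" and u: "smooth_on_pt (exterior M k) u"
  shows "sumt u (scl (\<lambda>r. 1 / wf M k r) (dd 0 (C2 M k)) @ scl (\<lambda>r. - (1 / wf M k r * (Delta M k r / r^2))) (d1 (C2 M k))) q = sumt u (C3 M k) q"
proof -
  obtain t r th ph where qq: "q = (t, r, th, ph)" by (cases q) auto
  have r: "0 < r" and D: "0 < Delta M k r" using q by (auto simp: qq exterior_def)
  show ?thesis
    apply (rule sumt_norm[OF open_exterior u q])
    using r D by (simp add: qq C2_def C3_def wf_def wprime_eq[OF r] field_simps; (unfold Delta_def)?; (intro conjI)?; algebra)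
qed

lemma nRl:
  assumes q: "q \<in> exterior M k" and u: "smooth_on_pt (exterior M k) u"
  shows "sumt u (scl (\<lambda>r. - (1 / wf M k r)) (scl (\<lambda>r. 1) (dd 0 (LB M k)) @ scl (\<lambda>r. Delta M k r / r^2) (d1 (LB M k))) @ scl (\<lambda>r. 2 * wprime M k r / wf M k r / wf M k r) (LB M k) @ [(\<lambda>r. 2 - 6 * M / r, \<lambda>r. 0, [])]) q = sumt u (Rl M k) q"
proof -
  obtain t r th ph where qq: "q = (t, r, th, ph)" by (cases q) auto
  have r: "0 < r" and D: "0 < Delta M k r" using q by (auto simp: qq exterior_def)
  show ?thesis
    apply (rule sumt_norm[OF open_exterior u q])
    using r D by (simp add: qq LB_def Rl_def wf_def wprime_eq[OF r] field_simps; (unfold Delta_def)?; (intro conjI)?; algebra)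
qed

lemma nRm:
  assumes q: "q \<in> exterior M k" and u: "smooth_on_pt (exterior M k) u"
  shows "sumt u (scl (\<lambda>r. - (1 / wf M k r)) (scl (\<lambda>r. 1) (dd 0 (LB M k)) @ scl (\<lambda>r. Delta M k r / r^2) (d1 (LB M k))) @ scl (\<lambda>r. - (2 * wprime M k r / wf M k r / wf M k r)) (LP M k) @ [(\<lambda>r. 2 - 6 * M / r, \<lambda>r. 0, [])]) q = sumt u (Rm M k) q"
proof -
  obtain t r th ph where qq: "q = (t, r, th, ph)" by (cases q) auto
  have r: "0 < r" and D: "0 < Delta M k r" using q by (auto simp: qq exterior_def)
  show ?thesis
    apply (rule sumt_norm[OF open_exterior u q])
    using r D by (simp add: qq LB_def LP_def Rm_def wf_def wprime_eq[OF r] field_simps; (unfold Delta_def)?; (intro conjI)?; algebra)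
qed

lemma nP1:
  assumes q: "q \<in> exterior M k" and u: "smooth_on_pt (exterior M k) u"
  shows "sumt u (d1 (Rl M k)) q = sumt u (P1 M k) q"
proof -
  obtain t r th ph where qq: "q = (t, r, th, ph)" by (cases q) auto
  have r: "0 < r" and D: "0 < Delta M k r" using q by (auto simp: qq exterior_def)
  show ?thesis
    apply (rule sumt_norm[OF open_exterior u q])
    using r D by (simp add: qq Rl_def P1_def wf_def wprime_eq[OF r] field_simps; (unfold Delta_def)?; (intro conjI)?; algebra)
qed

lemma nQ1:
  assumes q: "q \<in> exterior M k" and u: "smooth_on_pt (exterior M k) u"
  shows "sumt u (d1 (Rm M k)) q = sumt u (Q1 M k) q"
proof -
  obtain t r th ph where qq: "q = (t, r, th, ph)" by (cases q) auto
  have r: "0 < r" and D: "0 < Delta M k r" using q by (auto simp: qq exterior_def)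
  show ?thesis
    apply (rule sumt_norm[OF open_exterior u q])
    using r D by (simp add: qq Rm_def Q1_def wf_def wprime_eq[OF r] field_simps; (unfold Delta_def)?; (intro conjI)?; algebra)
qed

lemma nP2:
  assumes q: "q \<in> exterior M k" and u: "smooth_on_pt (exterior M k) u"
  shows "sumt u (d1 (P1 M k)) q = sumt u (P2 M k) q"
proof -
  obtain t r th ph where qq: "q = (t, r, th, ph)" by (cases q) auto
  have r: "0 < r" and D: "0 < Delta M k r" using q by (auto simp: qq exterior_def)
  show ?thesis
    apply (rule sumt_norm[OF open_exterior u q])
    using r D by (simp add: qq P1_def P2_def wf_def wprime_eq[OF r] field_simps; (unfold Delta_def)?; (intro conjI)?; algebra)
qed

lemma nQ2:
  assumes q: "q \<in> exterior M k" and u: "smooth_on_pt (exterior M k) u"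
  shows "sumt u (d1 (Q1 M k)) q = sumt u (Q2 M k) q"
proof -
  obtain t r th ph where qq: "q = (t, r, th, ph)" by (cases q) auto
  have r: "0 < r" and D: "0 < Delta M k r" using q by (auto simp: qq exterior_def)
  show ?thesis
    apply (rule sumt_norm[OF open_exterior u q])
    using r D by (simp add: qq Q1_def Q2_def wf_def wprime_eq[OF r] field_simps; (unfold Delta_def)?; (intro conjI)?; algebra)
qed

lemma nRHP:
  assumes q: "q \<in> exterior M k" and u: "smooth_on_pt (exterior M k) u"
  shows "sumt u (scl (\<lambda>r. (wf M k r)^2) (scl (\<lambda>r. 1 / wf M k r) (dd 0 (B3 M k)) @ scl (\<lambda>r. 1 / wf M k r * (Delta M k r / r^2)) (d1 (B3 M k)))) q = sumt u (RHP M k) q"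
proof -
  obtain t r th ph where qq: "q = (t, r, th, ph)" by (cases q) auto
  have r: "0 < r" and D: "0 < Delta M k r" using q by (auto simp: qq exterior_def)
  show ?thesis
    apply (rule sumt_norm[OF open_exterior u q])
    using r D by (simp add: qq B3_def RHP_def wf_def wprime_eq[OF r] field_simps; (unfold Delta_def)?; (intro conjI)?; algebra)
qed

lemma nRHM:
  assumes q: "q \<in> exterior M k" and u: "smooth_on_pt (exterior M k) u"
  shows "sumt u (scl (\<lambda>r. (wf M k r)^2) (scl (\<lambda>r. 1 / wf M k r) (dd 0 (C3 M k)) @ scl (\<lambda>r. - (1 / wf M k r * (Delta M k r / r^2))) (d1 (C3 M k)))) q = sumt u (RHM M k) q"
proof -
  obtain t r th ph where qq: "q = (t, r, th, ph)" by (cases q) auto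
  have r: "0 < r" and D: "0 < Delta M k r" using q by (auto simp: qq exterior_def)
  show ?thesis
    apply (rule sumt_norm[OF open_exterior u q])
    using r D by (simp add: qq C3_def RHM_def wf_def wprime_eq[OF r] field_simps; (unfold Delta_def)?; (intro conjI)?; algebra)
qed

definition XRl :: "real \<Rightarrow> real \<Rightarrow> nat list \<Rightarrow> coefs" where
  "XRl M k \<beta> = (if \<beta> = [] then Rl M k else if \<beta> = [0] then dd 0 (Rl M k) else if \<beta> = [1] then P1 M k
     else if \<beta> = [0,0] then dd 0 (dd 0 (Rl M k)) else P2 M k)"

lemma nFinP:
  assumes q: "q \<in> exterior M k" and u: "smooth_on_pt (exterior M k) u"
  shows "sumt u (concat (map (\<lambda>(c,c',\<beta>). scl c (XRl M k \<beta>)) (Rl M k)) @ scl (\<lambda>r. -2) (Rl M k) @ [(\<lambda>r. -12 * M, \<lambda>r. 0, [0])]) q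
       = sumt u (RHP M k) q"
proof -
  obtain t r th ph where qq: "q = (t, r, th, ph)" by (cases q) auto
  have r: "0 < r" and D: "0 < Delta M k r" using q by (auto simp: qq exterior_def)
  show ?thesis
    apply (rule sumt_norm[OF open_exterior u q])
    using r D by (simp add: qq XRl_def Rl_def P1_def P2_def RHP_def wf_def field_simps; (unfold Delta_def)?; (intro conjI)?; algebra)
qed

definition XRm :: "real \<Rightarrow> real \<Rightarrow> nat list \<Rightarrow> coefs" where
  "XRm M k \<beta> = (if \<beta> = [] then Rm M k else if \<beta> = [0] then dd 0 (Rm M k) else if \<beta> = [1] then Q1 M k
     else if \<beta> = [0,0] then dd 0 (dd 0 (Rm M k)) else Q2 M k)"

lemma nFinM:
  assumes q: "q \<in> exterior M k" and u: "smooth_on_pt (exterior M k) u"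
  shows "sumt u (concat (map (\<lambda>(c,c',\<beta>). scl c (XRm M k \<beta>)) (Rm M k)) @ scl (\<lambda>r. -2) (Rm M k) @ [(\<lambda>r. 12 * M, \<lambda>r. 0, [0])]) q
       = sumt u (RHM M k) q"
proof -
  obtain t r th ph where qq: "q = (t, r, th, ph)" by (cases q) auto
  have r: "0 < r" and D: "0 < Delta M k r" using q by (auto simp: qq exterior_def)
  show ?thesis
    apply (rule sumt_norm[OF open_exterior u q])
    using r D by (simp add: qq XRm_def Rm_def Q1_def Q2_def RHM_def wf_def field_simps; (unfold Delta_def)?; (intro conjI)?; algebra)
qed

lemma ext_pos: "q \<in> exterior M k \<Longrightarrow> 0 < fst (snd q) \<and> 0 < Delta M k (fst (snd q))"
  by (cases q) (auto simp: exterior_def)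

lemma sumt_local:
  assumes "open S" "p \<in> S" "\<And>q. q \<in> S \<Longrightarrow> f q = g q"
  shows "sumt f A p = sumt g A p"
proof (induction A)
  case (Cons a A) thus ?case using fold_pd_local[OF assms(1) assms(3) assms(2)] by (cases a) auto
qed simp

lemma sumt_via:
  assumes "\<And>c c' \<beta>. (c, c', \<beta>) \<in> set A \<Longrightarrow> fold pd \<beta> f p = sumt u (X \<beta>) p"
  shows "sumt f A p = sumt u (concat (map (\<lambda>(c,c',\<beta>). scl c (X \<beta>)) A)) p"
  using assms
proof (induction A)
  case (Cons a A)
  obtain c c' \<beta> where a: "a = (c, c', \<beta>)" by (cases a) auto
  have "fold pd \<beta> f p = sumt u (X \<beta>) p" using Cons.prems a by auto
  moreover have "sumt f A p = sumt u (concat (map (\<lambda>(c,c',\<beta>). scl c (X \<beta>)) A)) p"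
    by (rule Cons.IH) (use Cons.prems in auto)
  ultimately show ?case by (simp add: a sumt_scl)
qed simp

lemma sumt_single0: "sumt u [(\<lambda>r. c, \<lambda>r. 0, [0])] p = complex_of_real c * pd 0 u p"
  by simp

lemma plus_part:
  fixes M k :: real and u :: fn
  assumes sm: "smooth_on_pt (exterior M k) u"
    and T: "\<And>p. p \<in> exterior M k \<Longrightarrow> Teuk_plus M k u p = 0"
    and p: "p \<in> exterior M k"
  shows "Lang 1 (Lang 1 u) p - 2 * Lang 1 u p - complex_of_real (12 * M) * pd 0 u p
          = complex_of_real ((wf M k (fst (snd p)))^2) *
              winvL M k (winvL M k (winvLbar M k (winvLbar M k u))) p"
proof -
  let ?E = "exterior M k"
  have S: "open ?E" by (rule open_exterior)
  have dA0: "\<And>q. dok A0 (fst (snd q))" by (rule dok_A0)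
  have u0: "\<And>q. q \<in> ?E \<Longrightarrow> u q = sumt u A0 q" by (simp add: sumt_A0)
  have dokq: "\<And>q. q \<in> ?E \<Longrightarrow> 0 < fst (snd q) \<and> 0 < Delta M k (fst (snd q))" by (rule ext_pos)
  have y1: "winvLbar M k u q = sumt u (B1 M k) q" if q: "q \<in> ?E" for q
    using op_winvLbar[OF S q sm u0 dA0] nB1[OF q sm] by simp
  have y2: "winvLbar M k (winvLbar M k u) q = sumt u (B2 M k) q" if q: "q \<in> ?E" for q
    using op_winvLbar[OF S q sm y1 dok_B1] nB2[OF q sm] dokq[OF q] by simp
  have x3: "winvL M k (winvLbar M k (winvLbar M k u)) q = sumt u (B3 M k) q" if q: "q \<in> ?E" for q
    using op_winvL[OF S q sm y2 dok_B2] nB3[OF q sm] dokq[OF q] by simp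
  have rhs: "complex_of_real ((wf M k (fst (snd p)))^2) * winvL M k (winvL M k (winvLbar M k (winvLbar M k u))) p
      = sumt u (RHP M k) p"
    using op_winvL[OF S p sm x3 dok_B3] nRHP[OF p sm] dokq[OF p] by (simp add: sumt_scl)
  have lb: "Lbar M k u q = sumt u (LB M k) q" if q: "q \<in> ?E" for q
    using op_Lbar[OF S q sm u0 dA0] nLB[OF q sm] by simp
  have llb: "Lop M k (Lbar M k u) q = sumt u (scl (\<lambda>r. 1) (dd 0 (LB M k)) @ scl (\<lambda>r. Delta M k r / r^2) (d1 (LB M k))) q"
    if q: "q \<in> ?E" for q
    using op_Lop[OF S q sm lb dok_LB] dokq[OF q] by simp
  have teuk: "Lang 1 u q = sumt u (Rl M k) q" if q: "q \<in> ?E" for q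
  proof -
    obtain t r th ph where qq: "q = (t, r, th, ph)" by (cases q) auto
    have r: "0 < r" and D: "0 < Delta M k r" using q by (auto simp: qq exterior_def)
    have W: "wf M k r \<noteq> 0" using r D by (simp add: wf_def)
    have "Teuk_plus M k u q = 0" by (rule T[OF q])
    hence e: "- Lop M k (Lbar M k u) q + complex_of_real (2 * wprime M k r / wf M k r) * Lbar M k u q
       - complex_of_real (wf M k r) * (Lang 1 u q - 2 * u q + complex_of_real (6 * M / r) * u q) = 0"
      by (simp add: Teuk_plus_def qq)
    have "Lang 1 u q = complex_of_real (- (1 / wf M k r)) * Lop M k (Lbar M k u) q
        + complex_of_real (2 * wprime M k r / wf M k r / wf M k r) * Lbar M k u q
        + complex_of_real (2 - 6 * M / r) * u q"
      using e W by (simp add: field_simps)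
    also have "\<dots> = sumt u (scl (\<lambda>r. - (1 / wf M k r)) (scl (\<lambda>r. 1) (dd 0 (LB M k)) @ scl (\<lambda>r. Delta M k r / r^2) (d1 (LB M k)))
        @ scl (\<lambda>r. 2 * wprime M k r / wf M k r / wf M k r) (LB M k) @ [(\<lambda>r. 2 - 6 * M / r, \<lambda>r. 0, [])]) q"
      using llb[OF q] lb[OF q] by (simp add: sumt_scl qq)
    also have "\<dots> = sumt u (Rl M k) q" by (rule nRl[OF q sm])
    finally show ?thesis .
  qed
  have p1: "pd 1 (sumt u (Rl M k)) q = sumt u (P1 M k) q" if q: "q \<in> ?E" for q
    using pd_sumt_1[OF sm q dok_Rl] nP1[OF q sm] dokq[OF q] by simp
  have p0: "pd 0 (sumt u (Rl M k)) q = sumt u (dd 0 (Rl M k)) q" if q: "q \<in> ?E" for q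
    using pd_sumt_const[where i=0 and A="Rl M k", OF _ sm q] by simp
  have f00: "pd 0 (pd 0 (sumt u (Rl M k))) p = sumt u (dd 0 (dd 0 (Rl M k))) p"
    using pd_local[where f="pd 0 (sumt u (Rl M k))" and g="sumt u (dd 0 (Rl M k))" and i=0, OF S p p0] pd_sumt_const[where i=0 and A="dd 0 (Rl M k)", OF _ sm p] by simp
  have f11: "pd 1 (pd 1 (sumt u (Rl M k))) p = sumt u (P2 M k) p"
    using pd_local[where f="pd 1 (sumt u (Rl M k))" and g="sumt u (P1 M k)" and i=1, OF S p p1] pd_sumt_1[OF sm p dok_P1] nP2[OF p sm] dokq[OF p] by simp
  have via: "fold pd \<beta> (sumt u (Rl M k)) p = sumt u (XRl M k \<beta>) p" if "(c, c', \<beta>) \<in> set (Rl M k)" for c c' \<beta>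
  proof -
    have "\<beta> \<in> {[], [0], [1], [0,0], [1,1]}" using that by (auto simp: Rl_def)
    thus ?thesis using f00 f11 p0[OF p] p1[OF p] by (auto simp: XRl_def)
  qed
  have "Lang 1 (Lang 1 u) p = Lang 1 (sumt u (Rl M k)) p" by (rule Lang_local[OF p teuk])
  also have "\<dots> = sumt (Lang 1 u) (Rl M k) p"
    by (rule Lang_sumt_comm[OF sm p]) (auto simp: Rl_def)
  also have "\<dots> = sumt (sumt u (Rl M k)) (Rl M k) p" by (rule sumt_local[OF S p teuk])
  also have "\<dots> = sumt u (concat (map (\<lambda>(c,c',\<beta>). scl c (XRl M k \<beta>)) (Rl M k))) p"
    by (rule sumt_via) (rule via)
  finally have l1: "Lang 1 (Lang 1 u) p = sumt u (concat (map (\<lambda>(c,c',\<beta>). scl c (XRl M k \<beta>)) (Rl M k))) p" .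
  have "Lang 1 (Lang 1 u) p - 2 * Lang 1 u p - complex_of_real (12 * M) * pd 0 u p
      = sumt u (concat (map (\<lambda>(c,c',\<beta>). scl c (XRl M k \<beta>)) (Rl M k)) @ scl (\<lambda>r. -2) (Rl M k) @ [(\<lambda>r. -12 * M, \<lambda>r. 0, [0])]) p"
    using l1 teuk[OF p] by (simp add: sumt_scl)
  also have "\<dots> = sumt u (RHP M k) p" by (rule nFinP[OF p sm])
  finally show ?thesis using rhs by simp
qed

lemma minus_part:
  fixes M k :: real and u :: fn
  assumes sm: "smooth_on_pt (exterior M k) u"
    and T: "\<And>p. p \<in> exterior M k \<Longrightarrow> Teuk_minus M k u p = 0"
    and p: "p \<in> exterior M k"
  shows "Lang (-1) (Lang (-1) u) p - 2 * Lang (-1) u p + complex_of_real (12 * M) * pd 0 u p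
          = complex_of_real ((wf M k (fst (snd p)))^2) *
              winvLbar M k (winvLbar M k (winvL M k (winvL M k u))) p"
proof -
  let ?E = "exterior M k"
  have S: "open ?E" by (rule open_exterior)
  have dA0: "\<And>q. dok A0 (fst (snd q))" by (rule dok_A0)
  have u0: "\<And>q. q \<in> ?E \<Longrightarrow> u q = sumt u A0 q" by (simp add: sumt_A0)
  have dokq: "\<And>q. q \<in> ?E \<Longrightarrow> 0 < fst (snd q) \<and> 0 < Delta M k (fst (snd q))" by (rule ext_pos)
  have y1: "winvL M k u q = sumt u (C1 M k) q" if q: "q \<in> ?E" for q
    using op_winvL[OF S q sm u0 dA0] nC1[OF q sm] by simp
  have y2: "winvL M k (winvL M k u) q = sumt u (C2 M k) q" if q: "q \<in> ?E" for q
    using op_winvL[OF S q sm y1 dok_C1] nC2[OF q sm] dokq[OF q] by simp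
  have x3: "winvLbar M k (winvL M k (winvL M k u)) q = sumt u (C3 M k) q" if q: "q \<in> ?E" for q
    using op_winvLbar[OF S q sm y2 dok_C2] nC3[OF q sm] dokq[OF q] by simp
  have rhs: "complex_of_real ((wf M k (fst (snd p)))^2) * winvLbar M k (winvLbar M k (winvL M k (winvL M k u))) p
      = sumt u (RHM M k) p"
    using op_winvLbar[OF S p sm x3 dok_C3] nRHM[OF p sm] dokq[OF p] by (simp add: sumt_scl)
  have lb: "Lbar M k u q = sumt u (LB M k) q" if q: "q \<in> ?E" for q
    using op_Lbar[OF S q sm u0 dA0] nLB[OF q sm] by simp
  have lp: "Lop M k u q = sumt u (LP M k) q" if q: "q \<in> ?E" for q
    using op_Lop[OF S q sm u0 dA0] nLP[OF q sm] by simp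
  have llb: "Lop M k (Lbar M k u) q = sumt u (scl (\<lambda>r. 1) (dd 0 (LB M k)) @ scl (\<lambda>r. Delta M k r / r^2) (d1 (LB M k))) q"
    if q: "q \<in> ?E" for q
    using op_Lop[OF S q sm lb dok_LB] dokq[OF q] by simp
  have teuk: "Lang (-1) u q = sumt u (Rm M k) q" if q: "q \<in> ?E" for q
  proof -
    obtain t r th ph where qq: "q = (t, r, th, ph)" by (cases q) auto
    have r: "0 < r" and D: "0 < Delta M k r" using q by (auto simp: qq exterior_def)
    have W: "wf M k r \<noteq> 0" using r D by (simp add: wf_def)
    have "Teuk_minus M k u q = 0" by (rule T[OF q])
    hence e: "- Lop M k (Lbar M k u) q - complex_of_real (2 * wprime M k r / wf M k r) * Lop M k u q
       - complex_of_real (wf M k r) * (Lang (-1) u q - 2 * u q + complex_of_real (6 * M / r) * u q) = 0"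
      by (simp add: Teuk_minus_def qq)
    have "Lang (-1) u q = complex_of_real (- (1 / wf M k r)) * Lop M k (Lbar M k u) q
        + complex_of_real (- (2 * wprime M k r / wf M k r / wf M k r)) * Lop M k u q
        + complex_of_real (2 - 6 * M / r) * u q"
      using e W by (simp add: field_simps)
    also have "\<dots> = sumt u (scl (\<lambda>r. - (1 / wf M k r)) (scl (\<lambda>r. 1) (dd 0 (LB M k)) @ scl (\<lambda>r. Delta M k r / r^2) (d1 (LB M k)))
        @ scl (\<lambda>r. - (2 * wprime M k r / wf M k r / wf M k r)) (LP M k) @ [(\<lambda>r. 2 - 6 * M / r, \<lambda>r. 0, [])]) q"
      using llb[OF q] lp[OF q] by (simp add: sumt_scl qq)
    also have "\<dots> = sumt u (Rm M k) q" by (rule nRm[OF q sm])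
    finally show ?thesis .
  qed
  have p1: "pd 1 (sumt u (Rm M k)) q = sumt u (Q1 M k) q" if q: "q \<in> ?E" for q
    using pd_sumt_1[OF sm q dok_Rm] nQ1[OF q sm] dokq[OF q] by simp
  have p0: "pd 0 (sumt u (Rm M k)) q = sumt u (dd 0 (Rm M k)) q" if q: "q \<in> ?E" for q
    using pd_sumt_const[where i=0 and A="Rm M k", OF _ sm q] by simp
  have f00: "pd 0 (pd 0 (sumt u (Rm M k))) p = sumt u (dd 0 (dd 0 (Rm M k))) p"
    using pd_local[where f="pd 0 (sumt u (Rm M k))" and g="sumt u (dd 0 (Rm M k))" and i=0, OF S p p0] pd_sumt_const[where i=0 and A="dd 0 (Rm M k)", OF _ sm p] by simp
  have f11: "pd 1 (pd 1 (sumt u (Rm M k))) p = sumt u (Q2 M k) p"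
    using pd_local[where f="pd 1 (sumt u (Rm M k))" and g="sumt u (Q1 M k)" and i=1, OF S p p1] pd_sumt_1[OF sm p dok_Q1] nQ2[OF p sm] dokq[OF p] by simp
  have via: "fold pd \<beta> (sumt u (Rm M k)) p = sumt u (XRm M k \<beta>) p" if "(c, c', \<beta>) \<in> set (Rm M k)" for c c' \<beta>
  proof -
    have "\<beta> \<in> {[], [0], [1], [0,0], [1,1]}" using that by (auto simp: Rm_def)
    thus ?thesis using f00 f11 p0[OF p] p1[OF p] by (auto simp: XRm_def)
  qed
  have "Lang (-1) (Lang (-1) u) p = Lang (-1) (sumt u (Rm M k)) p" by (rule Lang_local[OF p teuk])
  also have "\<dots> = sumt (Lang (-1) u) (Rm M k) p"
    by (rule Lang_sumt_comm[OF sm p]) (auto simp: Rm_def)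
  also have "\<dots> = sumt (sumt u (Rm M k)) (Rm M k) p" by (rule sumt_local[OF S p teuk])
  also have "\<dots> = sumt u (concat (map (\<lambda>(c,c',\<beta>). scl c (XRm M k \<beta>)) (Rm M k))) p"
    by (rule sumt_via) (rule via)
  finally have l1: "Lang (-1) (Lang (-1) u) p = sumt u (concat (map (\<lambda>(c,c',\<beta>). scl c (XRm M k \<beta>)) (Rm M k))) p" .
  have "Lang (-1) (Lang (-1) u) p - 2 * Lang (-1) u p + complex_of_real (12 * M) * pd 0 u p
      = sumt u (concat (map (\<lambda>(c,c',\<beta>). scl c (XRm M k \<beta>)) (Rm M k)) @ scl (\<lambda>r. -2) (Rm M k) @ [(\<lambda>r. 12 * M, \<lambda>r. 0, [0])]) p"
    using l1 teuk[OF p] by (simp add: sumt_scl)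
  also have "\<dots> = sumt u (RHM M k) p" by (rule nFinM[OF p sm])
  finally show ?thesis using rhs by simp
qed

theorem lemma2p9:
  fixes M k :: real and ap am :: fn
  assumes "0 < M" and "0 < k"
    and "smooth_on_pt (exterior M k) ap"
    and "\<And>t r th ph. ap (t, r, th, ph + 2 * pi) = ap (t, r, th, ph)"
    and "\<And>p. p \<in> exterior M k \<Longrightarrow> Teuk_plus M k ap p = 0"
    and "smooth_on_pt (exterior M k) am"
    and "\<And>t r th ph. am (t, r, th, ph + 2 * pi) = am (t, r, th, ph)"
    and "\<And>p. p \<in> exterior M k \<Longrightarrow> Teuk_minus M k am p = 0"
  shows "(\<forall>p\<in>exterior M k. case p of (t, r, th, ph) \<Rightarrow>
            Lang 1 (Lang 1 ap) p - 2 * Lang 1 ap p - complex_of_real (12 * M) * pd 0 ap p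
          = complex_of_real ((wf M k r)^2) *
              winvL M k (winvL M k (winvLbar M k (winvLbar M k ap))) p)
       \<and> (\<forall>p\<in>exterior M k. case p of (t, r, th, ph) \<Rightarrow>
            Lang (-1) (Lang (-1) am) p - 2 * Lang (-1) am p + complex_of_real (12 * M) * pd 0 am p
          = complex_of_real ((wf M k r)^2) *
              winvLbar M k (winvLbar M k (winvL M k (winvL M k am))) p)"
proof (intro conjI ballI)
  fix p assume p: "p \<in> exterior M k"
  obtain t r th ph where pp: "p = (t, r, th, ph)" by (cases p) auto
  show "case p of (t, r, th, ph) \<Rightarrow>
            Lang 1 (Lang 1 ap) p - 2 * Lang 1 ap p - complex_of_real (12 * M) * pd 0 ap p
          = complex_of_real ((wf M k r)^2) *
              winvL M k (winvL M k (winvLbar M k (winvLbar M k ap))) p"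
    using plus_part[OF assms(3) assms(5) p] by (simp add: pp)
next
  fix p assume p: "p \<in> exterior M k"
  obtain t r th ph where pp: "p = (t, r, th, ph)" by (cases p) auto
  show "case p of (t, r, th, ph) \<Rightarrow>
            Lang (-1) (Lang (-1) am) p - 2 * Lang (-1) am p + complex_of_real (12 * M) * pd 0 am p
          = complex_of_real ((wf M k r)^2) *
              winvLbar M k (winvLbar M k (winvL M k (winvL M k am))) p"
    using minus_part[OF assms(6) assms(8) p] by (simp add: pp)
qed

end
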